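(* Let $q\in U(1)$. Let $A(U_{q^{-1},q}(2))$ be the complex $*$-Hopf algebra generated by $a,b,c,d$ and $D^{-1}$, where $D:=ad-q^{-1}bc$, subject to the relations $$ab=q^{-1}ba,\quad cd=q^{-1}dc,\quad ac=qca,\quad bd=qdb,\quad ad=da,\quad bc=q^2cb,\quad DD^{-1}=D^{-1}D=1,$$ with coproduct $\Delta(a)=a\otimes a+b\otimes c$, $\Delta(b)=a\otimes b+b\otimes d$, $\Delta(c)=c\otimes a+d\otimes c$, $\Delta(d)=c\otimes b+d\otimes d$, counit $\varepsilon(a)=\varepsilon(d)=1$, $\varepsilon(b)=\varepsilon(c)=0$, and involution $a^*=S(a)$, $b^*=S(c)$, $c^*=S(b)$, $d^*=S(d)$, where $S$ is the antipode. Put $z=D^{-1}ad$. Then the set of monomials $$D^kz^la^mc^n\ (m>0,n>0);\quad D^kz^la^mb^{-n}\ (m>0,n<0);\quad D^kz^ld^{-m}c^n\ (m<0,n>0);\quad D^kz^ld^{-m}b^{-n}\ (m<0,n<0);$$ $$D^kz^lc^n\ (n>0);\quad D^kz^lb^{-n}\ (n<0);\quad D^kz^la^m\ (m>0);\quad D^kz^ld^{-m}\ (m<0);\quad D^kz^l,$$ where $k,m,n\in\mathbb{Z}$ and $l\in\mathbb{Z}$, $l\ge 0$, is a $\mathbb{C}$-basis of $A(U_{q^{-1},q}(2))$. Moreover, let $I$ be the Hopf ideal of $A(U_{q^{-1},q}(2))$ generated by $\{ab,ac,cd,bd\}$, let $A(DT^2_q):=A(U_{q^{-1},q}(2))/I$,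 and denote the images of $a,b,c,d,D,z$ in the quotient by the same letters. Then the set $$D^ma^n,\quad D^md^n,\quad D^mz,\quad D^mb^n,\quad D^mc^n,\quad D^m(1-z),\qquad m,n\in\mathbb{Z},\ n>0,$$ is a $\mathbb{C}$-basis of $A(DT^2_q)$.
   Context: $A(DT^2_q)$ is called the coordinate ring of the quantum double-torus $DT^2_q$; it is a $*$-Hopf algebra. Note that for $q\in U(1)$ one has $\bar q=q^{-1}$, and $D=ad-q^{-1}bc=da-q^{-1}bc$. *)

theory Defs
  imports Complex_Main
begin

text \<open>The free associative unital complex algebra on the generators a, b, c, d, D^{-1}.
  Elements are finitely supported functions from words (lists of generators) to complex
  numbers; multiplication is concatenation of words extended bilinearly.\<close>

datatype gen = Ga | Gb | Gc | Gd | GDi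

type_synonym fa = "gen list \<Rightarrow> complex"

definition FA :: "fa set" where
  "FA = {f. finite {w. f w \<noteq> 0}}"

definition fa_zero :: fa where "fa_zero = (\<lambda>w. 0)"
definition fa_one :: fa where "fa_one = (\<lambda>w. if w = [] then 1 else 0)"
definition fa_gen :: "gen \<Rightarrow> fa" where "fa_gen x = (\<lambda>w. if w = [x] then 1 else 0)"
definition fa_add :: "fa \<Rightarrow> fa \<Rightarrow> fa" where "fa_add f g = (\<lambda>w. f w + g w)"
definition fa_sub :: "fa \<Rightarrow> fa \<Rightarrow> fa" where "fa_sub f g = (\<lambda>w. f w - g w)"
definition fa_scal :: "complex \<Rightarrow> fa \<Rightarrow> fa" where "fa_scal c f = (\<lambda>w. c * f w)"
definition fa_mult :: "fa \<Rightarrow> fa \<Rightarrow> fa" where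
  "fa_mult f g = (\<lambda>w. \<Sum>i\<le>length w. f (take i w) * g (drop i w))"
definition fa_pow :: "fa \<Rightarrow> nat \<Rightarrow> fa" where
  "fa_pow f n = (fa_mult f ^^ n) fa_one"

inductive_set fa_ideal :: "fa set \<Rightarrow> fa set" for R :: "fa set" where
  base: "r \<in> R \<Longrightarrow> r \<in> fa_ideal R"
| zero: "fa_zero \<in> fa_ideal R"
| add: "x \<in> fa_ideal R \<Longrightarrow> y \<in> fa_ideal R \<Longrightarrow> fa_add x y \<in> fa_ideal R"
| mult: "x \<in> fa_ideal R \<Longrightarrow> u \<in> FA \<Longrightarrow> v \<in> FA \<Longrightarrow> fa_mult (fa_mult u x) v \<in> fa_ideal R"

definition fa_lincomb :: "('i \<Rightarrow> complex) \<Rightarrow> 'i set \<Rightarrow> ('i \<Rightarrow> fa) \<Rightarrow> fa" where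
  "fa_lincomb c T mon = (\<lambda>w. \<Sum>i\<in>T. c i * mon i w)"

text \<open>The images of the family mon (indexed by S) in the quotient FA / J form a
  C-basis of the quotient: they span it and are linearly independent.\<close>
definition basis_mod :: "fa set \<Rightarrow> 'i set \<Rightarrow> ('i \<Rightarrow> fa) \<Rightarrow> bool" where
  "basis_mod J S mon \<longleftrightarrow>
     (\<forall>f\<in>FA. \<exists>c T. finite T \<and> T \<subseteq> S \<and> fa_sub f (fa_lincomb c T mon) \<in> J) \<and>
     (\<forall>c T. finite T \<and> T \<subseteq> S \<and> fa_lincomb c T mon \<in> J \<longrightarrow> (\<forall>i\<in>T. c i = 0))"

abbreviation "ga \<equiv> fa_gen Ga"
abbreviation "gb \<equiv> fa_gen Gb"
abbreviation "gc \<equiv> fa_gen Gc"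
abbreviation "gd \<equiv> fa_gen Gd"
abbreviation "gDi \<equiv> fa_gen GDi"

definition qD :: "complex \<Rightarrow> fa" where
  "qD q = fa_sub (fa_mult ga gd) (fa_scal (inverse q) (fa_mult gb gc))"

definition Urels :: "complex \<Rightarrow> fa set" where
  "Urels q = {
     fa_sub (fa_mult ga gb) (fa_scal (inverse q) (fa_mult gb ga)),
     fa_sub (fa_mult gc gd) (fa_scal (inverse q) (fa_mult gd gc)),
     fa_sub (fa_mult ga gc) (fa_scal q (fa_mult gc ga)),
     fa_sub (fa_mult gb gd) (fa_scal q (fa_mult gd gb)),
     fa_sub (fa_mult ga gd) (fa_mult gd ga),
     fa_sub (fa_mult gb gc) (fa_scal (q^2) (fa_mult gc gb)),
     fa_sub (fa_mult (qD q) gDi) fa_one,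
     fa_sub (fa_mult gDi (qD q)) fa_one }"

definition DTrels :: "fa set" where
  "DTrels = {fa_mult ga gb, fa_mult ga gc, fa_mult gc gd, fa_mult gb gd}"

definition Dpow :: "complex \<Rightarrow> int \<Rightarrow> fa" where
  "Dpow q k = (if k \<ge> 0 then fa_pow (qD q) (nat k) else fa_pow gDi (nat (- k)))"

definition qz :: fa where "qz = fa_mult (fa_mult gDi ga) gd"

definition Xpow :: "int \<Rightarrow> fa" where
  "Xpow m = (if m > 0 then fa_pow ga (nat m) else if m < 0 then fa_pow gd (nat (- m)) else fa_one)"

definition Ypow :: "int \<Rightarrow> fa" where
  "Ypow n = (if n > 0 then fa_pow gc (nat n) else if n < 0 then fa_pow gb (nat (- n)) else fa_one)"

text \<open>The monomials D^k z^l X(m) Y(n); the nine families of the paper are exactly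
  the nine sign patterns of (m,n).\<close>
definition mono1 :: "complex \<Rightarrow> int \<times> nat \<times> int \<times> int \<Rightarrow> fa" where
  "mono1 q = (\<lambda>(k, l, m, n). fa_mult (fa_mult (fa_mult (Dpow q k) (fa_pow qz l)) (Xpow m)) (Ypow n))"

datatype idx2 = IA int nat | ID int nat | IZ int | IB int nat | IC int nat | IZc int

definition S2 :: "idx2 set" where
  "S2 = {IA m n | m n. n > 0} \<union> {ID m n | m n. n > 0} \<union> range IZ \<union>
        {IB m n | m n. n > 0} \<union> {IC m n | m n. n > 0} \<union> range IZc"

definition mono2 :: "complex \<Rightarrow> idx2 \<Rightarrow> fa" where
  "mono2 q i = (case i of
      IA m n \<Rightarrow> fa_mult (Dpow q m) (fa_pow ga n)
    | ID m n \<Rightarrow> fa_mult (Dpow q m) (fa_pow gd n)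
    | IZ m \<Rightarrow> fa_mult (Dpow q m) qz
    | IB m n \<Rightarrow> fa_mult (Dpow q m) (fa_pow gb n)
    | IC m n \<Rightarrow> fa_mult (Dpow q m) (fa_pow gc n)
    | IZc m \<Rightarrow> fa_mult (Dpow q m) (fa_sub fa_one qz))"

end

theory Submission
  imports Defs "HOL-Library.Poly_Mapping"
begin


instantiation list :: (type) monoid_add
begin
definition zero_list :: "'a list" where "zero_list = []"
definition plus_list :: "'a list \<Rightarrow> 'a list \<Rightarrow> 'a list" where "plus_list = append"
instance by standard (auto simp: zero_list_def plus_list_def)
end

lemma plus_list_eq [simp]: "(u::'a list) + v = u @ v" by (simp add: plus_list_def)
lemma zero_list_eq [simp]: "(0::'a list) = []" by (simp add: zero_list_def)

abbreviation lookup :: "('a \<Rightarrow>\<^sub>0 'b::zero) \<Rightarrow> 'a \<Rightarrow> 'b" where "lookup \<equiv> Poly_Mapping.lookup"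
abbreviation keys :: "('a \<Rightarrow>\<^sub>0 'b::zero) \<Rightarrow> 'a set" where "keys \<equiv> Poly_Mapping.keys"
abbreviation single :: "'a \<Rightarrow> 'b \<Rightarrow> ('a \<Rightarrow>\<^sub>0 'b::zero)" where "single \<equiv> Poly_Mapping.single"

type_synonym P = "gen list \<Rightarrow>\<^sub>0 complex"

definition toP :: "fa \<Rightarrow> P" where "toP f = Abs_poly_mapping f"

lemma lookup_toP [simp]: "f \<in> FA \<Longrightarrow> lookup (toP f) = f"
  by (simp add: toP_def FA_def)

lemma lookup_FA [simp]: "lookup p \<in> FA"
  by (simp add: FA_def)

lemma toP_lookup [simp]: "toP (lookup p) = p"
  by (simp add: toP_def lookup_inverse)

lemma Sum_any_split_list:
  fixes F :: "'a list \<times> 'a list \<Rightarrow> complex"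
  shows "Sum_any (\<lambda>(a, b). F (a, b) when k = a + b) = (\<Sum>i\<le>length k. F (take i k, drop i k))"
proof -
  let ?S = "(\<lambda>i. (take i k, drop i k)) ` {..length k}"
  have fin: "finite ?S" by simp
  have sub: "{p. (case p of (a, b) \<Rightarrow> F (a, b) when k = a + b) \<noteq> 0} \<subseteq> ?S"
  proof
    fix p assume "p \<in> {p. (case p of (a, b) \<Rightarrow> F (a, b) when k = a + b) \<noteq> 0}"
    then obtain a b where p: "p = (a, b)" and "k = a @ b" by (cases p) (auto simp: when_def split: if_splits)
    then have "p = (take (length a) k, drop (length a) k)" "length a \<le> length k" by auto
    then show "p \<in> ?S" by auto
  qed
  have "Sum_any (\<lambda>(a, b). F (a, b) when k = a + b) = sum (\<lambda>(a, b). F (a, b) when k = a + b) ?S"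
    by (rule Sum_any.expand_superset[OF fin sub])
  also have "\<dots> = (\<Sum>i\<le>length k. (\<lambda>(a, b). F (a, b) when k = a + b) (take i k, drop i k))"
  proof (rule sum.reindex[unfolded comp_def])
    show "inj_on (\<lambda>i. (take i k, drop i k)) {..length k}"
    proof (rule inj_onI)
      fix i j assume "i \<in> {..length k}" "j \<in> {..length k}" "(take i k, drop i k) = (take j k, drop j k)"
      then show "i = j" by (metis Pair_inject atMost_iff length_take min.absorb2)
    qed
  qed
  also have "\<dots> = (\<Sum>i\<le>length k. F (take i k, drop i k))"
    by (simp add: when_def)
  finally show ?thesis .
qed

lemma lookup_times: "lookup (p * r) = fa_mult (lookup p) (lookup r)"
proof -
  have "lookup (p * r) = prod_fun (lookup p) (lookup r)"
    by (simp add: times_poly_mapping.rep_eq)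
  also have "\<dots> = (\<lambda>k. Sum_any (\<lambda>(a, b). lookup p a * lookup r b when k = a + b))"
    by (rule ext, rule prod_fun_unfold_prod) auto
  also have "\<dots> = fa_mult (lookup p) (lookup r)"
    unfolding fa_mult_def
    using Sum_any_split_list[where F = "\<lambda>(a,b). lookup p a * lookup r b"] by simp
  finally show ?thesis .
qed

lemma fa_mult_lookup: "f \<in> FA \<Longrightarrow> g \<in> FA \<Longrightarrow> fa_mult f g = lookup (toP f * toP g)"
  by (simp add: lookup_times)

lemma toP_mult: "f \<in> FA \<Longrightarrow> g \<in> FA \<Longrightarrow> toP (fa_mult f g) = toP f * toP g"
  by (simp add: fa_mult_lookup)

lemma FA_mult [simp]: "f \<in> FA \<Longrightarrow> g \<in> FA \<Longrightarrow> fa_mult f g \<in> FA"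
  by (simp add: fa_mult_lookup)

lemma fa_add_lookup: "f \<in> FA \<Longrightarrow> g \<in> FA \<Longrightarrow> fa_add f g = lookup (toP f + toP g)"
  by (simp add: fa_add_def lookup_add fun_eq_iff)

lemma FA_add [simp]: "f \<in> FA \<Longrightarrow> g \<in> FA \<Longrightarrow> fa_add f g \<in> FA"
  by (simp add: fa_add_lookup)

lemma toP_add: "f \<in> FA \<Longrightarrow> g \<in> FA \<Longrightarrow> toP (fa_add f g) = toP f + toP g"
  by (simp add: fa_add_lookup)

lemma fa_sub_lookup: "f \<in> FA \<Longrightarrow> g \<in> FA \<Longrightarrow> fa_sub f g = lookup (toP f - toP g)"
  by (simp add: fa_sub_def lookup_minus fun_eq_iff)

lemma FA_sub [simp]: "f \<in> FA \<Longrightarrow> g \<in> FA \<Longrightarrow> fa_sub f g \<in> FA"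
  by (simp add: fa_sub_lookup)

lemma toP_sub: "f \<in> FA \<Longrightarrow> g \<in> FA \<Longrightarrow> toP (fa_sub f g) = toP f - toP g"
  by (simp add: fa_sub_lookup)

definition sc :: "complex \<Rightarrow> P" where "sc c = single [] c"

lemma lookup_sc_mult: "lookup (sc c * p) = (\<lambda>w. c * lookup p w)"
proof -
  have "lookup (sc c * p) = fa_mult (lookup (sc c)) (lookup p)" by (rule lookup_times)
  also have "\<dots> = (\<lambda>w. c * lookup p w)"
  proof (rule ext)
    fix w
    have "fa_mult (lookup (sc c)) (lookup p) w = (\<Sum>i\<le>length w. (if i = 0 then c * lookup p w else 0))"
      unfolding fa_mult_def sc_def
      by (rule sum.cong) (auto simp: lookup_single when_def)
    also have "\<dots> = c * lookup p w" by (simp add: sum.delta)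
    finally show "fa_mult (lookup (sc c)) (lookup p) w = c * lookup p w" .
  qed
  finally show ?thesis .
qed

lemma fa_scal_lookup: "f \<in> FA \<Longrightarrow> fa_scal c f = lookup (sc c * toP f)"
  by (simp add: lookup_sc_mult fa_scal_def)

lemma FA_scal [simp]: "f \<in> FA \<Longrightarrow> fa_scal c f \<in> FA"
  by (simp add: fa_scal_lookup)

lemma toP_scal: "f \<in> FA \<Longrightarrow> toP (fa_scal c f) = sc c * toP f"
  by (simp add: fa_scal_lookup)

lemma lookup_one_fa: "fa_one = lookup (1::P)"
  by (auto simp: lookup_one fa_one_def when_def)

lemma FA_one [simp]: "fa_one \<in> FA" by (simp add: lookup_one_fa)
lemma toP_one [simp]: "toP fa_one = 1" by (simp add: lookup_one_fa)

lemma lookup_gen: "fa_gen x = lookup (single [x] 1)"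
  by (auto simp: lookup_single fa_gen_def when_def)

lemma FA_gen [simp]: "fa_gen x \<in> FA" by (simp add: lookup_gen)
lemma toP_gen: "toP (fa_gen x) = single [x] 1" by (simp add: lookup_gen)

lemma lookup_zero_fa: "fa_zero = lookup (0::P)" by (auto simp: fa_zero_def)
lemma FA_zero [simp]: "fa_zero \<in> FA" by (simp add: lookup_zero_fa)
lemma toP_zero [simp]: "toP fa_zero = 0" by (simp add: lookup_zero_fa)

lemma FA_pow [simp]: "f \<in> FA \<Longrightarrow> fa_pow f n \<in> FA"
  by (induct n) (auto simp: fa_pow_def)

lemma toP_pow: "f \<in> FA \<Longrightarrow> toP (fa_pow f n) = toP f ^ n"
proof (induct n)
  case 0 then show ?case by (simp add: fa_pow_def)
next
  case (Suc n)
  have "fa_pow f (Suc n) = fa_mult f (fa_pow f n)" by (simp add: fa_pow_def)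
  then show ?case using Suc by (simp add: toP_mult)
qed

lemma sc_mult: "sc a * sc b = sc (a * b)" by (simp add: sc_def mult_single)
lemma sc_add: "sc a + sc b = sc (a + b)" by (simp add: sc_def single_add)
lemma sc_diff: "sc a - sc b = sc (a - b)" by (simp add: sc_def single_diff)
lemma sc_one [simp]: "sc 1 = 1" using single_one[where 'a="gen list" and 'b=complex] by (simp add: sc_def)
lemma sc_zero [simp]: "sc 0 = 0" by (simp add: sc_def)
lemma sc_comm: "sc a * p = p * sc a"
proof (rule poly_mapping_eqI)
  fix k
  have "lookup (p * sc a) k = (\<Sum>i\<le>length k. if i = length k then lookup p k * a else 0)"
    unfolding lookup_times fa_mult_def sc_def
    by (rule sum.cong) (auto simp: lookup_single when_def)
  then show "lookup (sc a * p) k = lookup (p * sc a) k"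
    by (simp add: lookup_sc_mult)
qed


inductive_set pI :: "P set \<Rightarrow> P set" for R :: "P set" where
  base: "r \<in> R \<Longrightarrow> r \<in> pI R"
| zero: "0 \<in> pI R"
| add: "x \<in> pI R \<Longrightarrow> y \<in> pI R \<Longrightarrow> x + y \<in> pI R"
| mult: "x \<in> pI R \<Longrightarrow> u * x * v \<in> pI R"

lemma pI_to_fa:
  assumes "x \<in> pI (toP ` R)" "R \<subseteq> FA"
  shows "lookup x \<in> fa_ideal R"
  using assms(1)
proof induct
  case (base r)
  then obtain f where f: "f \<in> R" "r = toP f" by auto
  then have "f \<in> FA" using assms(2) by blast
  then show ?case using f fa_ideal.base[of f R] by simp
next
  case zero
  then show ?case using fa_ideal.zero[of R] by (simp add: fa_zero_def)
next
  case (add x y)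
  then show ?case using fa_ideal.add[of "lookup x" R "lookup y"] by (simp add: fa_add_lookup)
next
  case (mult x u v)
  then show ?case using fa_ideal.mult[of "lookup x" R "lookup u" "lookup v"] by (simp add: fa_mult_lookup)
qed

lemma fa_to_pI:
  assumes "f \<in> fa_ideal R" "R \<subseteq> FA"
  shows "f \<in> FA \<and> toP f \<in> pI (toP ` R)"
  using assms(1)
proof induct
  case (base r)
  then show ?case using assms(2) by (auto intro: pI.base)
next
  case zero
  then show ?case by (simp add: pI.zero)
next
  case (add x y)
  then show ?case by (simp add: toP_add pI.add)
next
  case (mult x u v)
  then show ?case by (simp add: toP_mult pI.mult)
qed

lemma pI_uminus: "x \<in> pI R \<Longrightarrow> - x \<in> pI R"
  using pI.mult[of x R "-1" 1] by simp

lemma pI_diff: "x \<in> pI R \<Longrightarrow> y \<in> pI R \<Longrightarrow> x - y \<in> pI R"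
  using pI.add[of x R "- y"] pI_uminus by simp

lemma pI_lmult: "x \<in> pI R \<Longrightarrow> u * x \<in> pI R"
  using pI.mult[of x R u 1] by simp

lemma pI_rmult: "x \<in> pI R \<Longrightarrow> x * v \<in> pI R"
  using pI.mult[of x R 1 v] by simp

lemma pI_mono: "x \<in> pI R \<Longrightarrow> R \<subseteq> R' \<Longrightarrow> x \<in> pI R'"
  by (induct rule: pI.induct) (auto intro: pI.intros)

definition cg :: "P set \<Rightarrow> P \<Rightarrow> P \<Rightarrow> bool" where
  "cg R x y \<longleftrightarrow> x - y \<in> pI R"

lemma cg_refl [simp, intro]: "cg R x x" by (simp add: cg_def pI.zero)
lemma cg_eq: "x = y \<Longrightarrow> cg R x y" by simp
lemma cg_sym: "cg R x y \<Longrightarrow> cg R y x"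
  unfolding cg_def using pI_uminus by fastforce
lemma cg_trans [trans]: "cg R x y \<Longrightarrow> cg R y z \<Longrightarrow> cg R x z"
  unfolding cg_def using pI.add by fastforce
lemma cg_trans_eq1 [trans]: "x = y \<Longrightarrow> cg R y z \<Longrightarrow> cg R x z" by simp
lemma cg_trans_eq2 [trans]: "cg R x y \<Longrightarrow> y = z \<Longrightarrow> cg R x z" by simp
lemma cg_add: "cg R x x' \<Longrightarrow> cg R y y' \<Longrightarrow> cg R (x + y) (x' + y')"
  unfolding cg_def using pI.add by (fastforce simp: algebra_simps)
lemma cg_diff: "cg R x x' \<Longrightarrow> cg R y y' \<Longrightarrow> cg R (x - y) (x' - y')"
  unfolding cg_def using pI_diff by (fastforce simp: algebra_simps)
lemma cg_uminus: "cg R x x' \<Longrightarrow> cg R (- x) (- x')"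
  unfolding cg_def using pI_uminus by (fastforce simp: algebra_simps)
lemma cg_mult: "cg R x x' \<Longrightarrow> cg R y y' \<Longrightarrow> cg R (x * y) (x' * y')"
proof -
  assume "cg R x x'" "cg R y y'"
  then have "(x - x') * y \<in> pI R" "x' * (y - y') \<in> pI R"
    unfolding cg_def by (auto intro: pI_lmult pI_rmult)
  then have "(x - x') * y + x' * (y - y') \<in> pI R" by (rule pI.add)
  then show ?thesis unfolding cg_def by (simp add: algebra_simps)
qed
lemma cg_zero_iff: "cg R x 0 \<longleftrightarrow> x \<in> pI R" by (simp add: cg_def)
lemma cg_mono: "cg R x y \<Longrightarrow> R \<subseteq> R' \<Longrightarrow> cg R' x y"
  unfolding cg_def using pI_mono by blast

type_synonym 'i vec = "'i \<Rightarrow> complex"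

definition linop :: "('i vec \<Rightarrow> 'j vec) \<Rightarrow> bool" where
  "linop T \<longleftrightarrow> (\<forall>y z. T (\<lambda>x. y x + z x) = (\<lambda>x. T y x + T z x)) \<and>
                 (\<forall>c y. T (\<lambda>x. c * y x) = (\<lambda>x. c * T y x))"

lemma linop_add: "linop T \<Longrightarrow> T (\<lambda>x. y x + z x) = (\<lambda>x. T y x + T z x)"
  by (simp add: linop_def)
lemma linop_scal: "linop T \<Longrightarrow> T (\<lambda>x. c * y x) = (\<lambda>x. c * T y x)"
  by (simp add: linop_def)
lemma linop_zero: "linop T \<Longrightarrow> T (\<lambda>x. 0) = (\<lambda>x. 0)"
  using linop_scal[of T 0 "\<lambda>x. 0"] by simp
lemma linop_sum:
  assumes "linop T" "finite S"
  shows "T (\<lambda>x. \<Sum>j\<in>S. c j * Y j x) = (\<lambda>x. \<Sum>j\<in>S. c j * T (Y j) x)"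
  using assms(2)
proof induct
  case empty then show ?case using linop_zero[OF assms(1)] by simp
next
  case (insert j S)
  have "T (\<lambda>x. \<Sum>j\<in>insert j S. c j * Y j x) = T (\<lambda>x. c j * Y j x + (\<Sum>j\<in>S. c j * Y j x))"
    using insert by simp
  also have "\<dots> = (\<lambda>x. T (\<lambda>x. c j * Y j x) x + T (\<lambda>x. \<Sum>j\<in>S. c j * Y j x) x)"
    by (rule linop_add[OF assms(1)])
  also have "\<dots> = (\<lambda>x. \<Sum>j\<in>insert j S. c j * T (Y j) x)"
    using insert linop_scal[OF assms(1)] by simp
  finally show ?case .
qed
lemma linop_comp: "linop S \<Longrightarrow> linop T \<Longrightarrow> linop (\<lambda>y. S (T y))"
  by (simp add: linop_def)
lemma linop_id: "linop (\<lambda>y. y)"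
  by (simp add: linop_def)

primrec wop :: "(gen \<Rightarrow> 'i vec \<Rightarrow> 'i vec) \<Rightarrow> gen list \<Rightarrow> 'i vec \<Rightarrow> 'i vec" where
  "wop ops [] y = y"
| "wop ops (g # w) y = ops g (wop ops w y)"

lemma wop_append: "wop ops (u @ v) y = wop ops u (wop ops v y)"
  by (induct u) auto

lemma linop_wop: "(\<And>g. linop (ops g)) \<Longrightarrow> linop (wop ops w)"
proof (induct w)
  case Nil then show ?case using linop_id by (simp add: linop_def)
next
  case (Cons g w)
  then have "linop (\<lambda>y. ops g (wop ops w y))" using linop_comp[of "ops g" "wop ops w"] by blast
  then show ?case by (simp add: linop_def)
qed

definition rho :: "(gen \<Rightarrow> 'i vec \<Rightarrow> 'i vec) \<Rightarrow> P \<Rightarrow> 'i vec \<Rightarrow> 'i vec" where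
  "rho ops p y = (\<lambda>x. \<Sum>w\<in>keys p. lookup p w * wop ops w y x)"

lemma rho_superset:
  assumes "finite S" "keys p \<subseteq> S"
  shows "rho ops p y = (\<lambda>x. \<Sum>w\<in>S. lookup p w * wop ops w y x)"
  unfolding rho_def
  by (rule ext, rule sum.mono_neutral_left) (use assms in \<open>auto simp: in_keys_iff\<close>)

lemma rho_add: "rho ops (p + r) y = (\<lambda>x. rho ops p y x + rho ops r y x)"
proof -
  let ?S = "keys p \<union> keys r"
  have "finite ?S" by simp
  have k: "keys (p + r) \<subseteq> ?S" by (rule keys_add)
  show ?thesis
    using rho_superset[OF \<open>finite ?S\<close> k, of ops y] rho_superset[OF \<open>finite ?S\<close>, of p ops y]
      rho_superset[OF \<open>finite ?S\<close>, of r ops y]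
    by (simp add: lookup_add algebra_simps sum.distrib)
qed

lemma rho_zero: "rho ops 0 y = (\<lambda>x. 0)"
  by (simp add: rho_def)

lemma rho_sum: "finite S \<Longrightarrow> rho ops (\<Sum>j\<in>S. p j) y = (\<lambda>x. \<Sum>j\<in>S. rho ops (p j) y x)"
  by (induct rule: finite_induct) (auto simp: rho_zero rho_add)

lemma rho_single: "rho ops (single w c) y = (\<lambda>x. c * wop ops w y x)"
  using rho_superset[of "{w}" "single w c" ops y] by (simp add: lookup_single)

lemma P_as_sum: "p = (\<Sum>w\<in>keys p. single w (lookup p w))"
  by (rule poly_mapping_eqI) (simp add: lookup_sum lookup_single when_def in_keys_iff sum.delta)

lemma linop_rho:
  assumes lin: "\<And>g. linop (ops g)" shows "linop (rho ops p)"
proof -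
  have a: "wop ops w (\<lambda>x. y x + z x) = (\<lambda>x. wop ops w y x + wop ops w z x)" for w y z
    by (rule linop_add[OF linop_wop[OF lin]])
  have b: "wop ops w (\<lambda>x. c * y x) = (\<lambda>x. c * wop ops w y x)" for w c y
    by (rule linop_scal[OF linop_wop[OF lin]])
  show ?thesis unfolding linop_def rho_def
    by (simp add: a b sum.distrib sum_distrib_left algebra_simps)
qed

lemma rho_mult:
  assumes lin: "\<And>g. linop (ops g)"
  shows "rho ops (p * r) y = rho ops p (rho ops r y)"
proof -
  have "p * r = (\<Sum>u\<in>keys p. single u (lookup p u)) * (\<Sum>v\<in>keys r. single v (lookup r v))"
    using P_as_sum[of p] P_as_sum[of r] by simp
  also have "\<dots> = (\<Sum>u\<in>keys p. \<Sum>v\<in>keys r. single (u @ v) (lookup p u * lookup r v))"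
    by (simp add: sum_distrib_left sum_distrib_right mult_single) (rule sum.swap)
  finally have pr: "p * r = \<dots>" .
  have "rho ops (p * r) y = (\<lambda>x. \<Sum>u\<in>keys p. \<Sum>v\<in>keys r. lookup p u * lookup r v * wop ops (u @ v) y x)"
    unfolding pr by (simp add: rho_sum rho_single)
  also have "\<dots> = (\<lambda>x. \<Sum>u\<in>keys p. lookup p u * wop ops u (\<lambda>x'. \<Sum>v\<in>keys r. lookup r v * wop ops v y x') x)"
    using linop_sum[OF linop_wop[OF lin], of "keys r"]
    by (simp add: wop_append sum_distrib_left algebra_simps)
  also have "\<dots> = rho ops p (rho ops r y)"
    by (simp add: rho_def)
  finally show ?thesis .
qed

lemma rho_one: "rho ops 1 y = y"
  using rho_single[of ops "[]" 1 y] single_one[where 'a="gen list" and 'b=complex] by simp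

lemma rho_sc: "rho ops (sc c) y = (\<lambda>x. c * y x)"
  by (simp add: sc_def rho_single)

lemma rho_uminus: "(\<And>g. linop (ops g)) \<Longrightarrow> rho ops (- p) y = (\<lambda>x. - rho ops p y x)"
proof -
  assume lin: "\<And>g. linop (ops g)"
  have "- p = sc (-1) * p" by (rule poly_mapping_eqI) (simp add: lookup_sc_mult)
  then show ?thesis using rho_mult[of ops "sc (-1)" p y, OF lin] by (simp add: rho_sc)
qed

lemma rho_diff: "(\<And>g. linop (ops g)) \<Longrightarrow> rho ops (p - r) y = (\<lambda>x. rho ops p y x - rho ops r y x)"
  using rho_add[of ops p "- r" y] rho_uminus[of ops r y] by simp

lemma rho_kills:
  assumes lin: "\<And>g. linop (ops g)"
    and R: "\<And>r y. r \<in> R \<Longrightarrow> rho ops r y = (\<lambda>x. 0)"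
    and x: "x \<in> pI R"
  shows "rho ops x y = (\<lambda>x. 0)"
  using x
proof (induct arbitrary: y)
  case (base r) then show ?case by (rule R)
next
  case zero then show ?case by (rule rho_zero)
next
  case (add x y') then show ?case by (simp add: rho_add)
next
  case (mult x u v)
  then show ?case by (simp add: rho_mult[OF lin] linop_zero[OF linop_rho[OF lin]])
qed


definition pa :: P where "pa = single [Ga] 1"
definition pb :: P where "pb = single [Gb] 1"
definition pc :: P where "pc = single [Gc] 1"
definition pd :: P where "pd = single [Gd] 1"
definition pe :: P where "pe = single [GDi] 1"

lemma mult_sc_right: "x * sc a = sc a * x"
  by (simp add: sc_comm)

definition sm :: "complex \<Rightarrow> P \<Rightarrow> P" where "sm c x = sc c * x"

lemma sm_mult_left [simp]: "sm c x * y = sm c (x * y)"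
  by (simp add: sm_def mult.assoc)
lemma mult_sm [simp]: "x * sm c y = sm c (x * y)"
  by (simp add: sm_def) (metis mult.assoc sc_comm)
lemma sm_sm [simp]: "sm a (sm b x) = sm (a * b) x"
  by (simp add: sm_def sc_mult mult.assoc[symmetric])
lemma sm_one [simp]: "sm 1 x = x"
  by (simp add: sm_def)
lemma sm_diff: "sm c (x - y) = sm c x - sm c y"
  by (simp add: sm_def algebra_simps)
lemma sm_add: "sm c (x + y) = sm c x + sm c y"
  by (simp add: sm_def algebra_simps)
lemma sm_comm: "sm c x = x * sc c"
  by (simp add: sm_def sc_comm)

definition pD :: "complex \<Rightarrow> P" where "pD q = pa * pd - sm (inverse q) (pb * pc)"
definition pZ :: P where "pZ = pe * pa * pd"

lemma cg_lmult: "cg R x y \<Longrightarrow> cg R (u * x) (u * y)"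
  by (rule cg_mult) auto
lemma cg_rmult: "cg R x y \<Longrightarrow> cg R (x * u) (y * u)"
  by (rule cg_mult) auto
lemma cg_ctx: "cg R x y \<Longrightarrow> cg R (u * x * v) (u * y * v)"
  by (intro cg_mult) auto

locale qrel =
  fixes q :: complex and R :: "P set"
  assumes qnz: "q \<noteq> 0"
  and r1: "cg R (pa * pb) (sm (inverse q) (pb * pa))"
  and r2: "cg R (pc * pd) (sm (inverse q) (pd * pc))"
  and r3: "cg R (pa * pc) (sm q (pc * pa))"
  and r4: "cg R (pb * pd) (sm q (pd * pb))"
  and r5: "cg R (pa * pd) (pd * pa)"
  and r6: "cg R (pb * pc) (sm (q ^ 2) (pc * pb))"
  and r7: "cg R (pD q * pe) 1"
  and r8: "cg R (pe * pD q) 1"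
begin

abbreviation ceq (infix "\<approx>" 50) where "x \<approx> y \<equiv> cg R x y"

definition qc :: "P \<Rightarrow> P \<Rightarrow> complex \<Rightarrow> bool" where
  "qc x y \<alpha> \<longleftrightarrow> x * y \<approx> sm \<alpha> (y * x)"

lemma cg_sm: "x \<approx> y \<Longrightarrow> sm c x \<approx> sm c y"
  unfolding sm_def by (rule cg_lmult)

lemma qc_eq: "qc x y \<alpha> \<Longrightarrow> \<alpha> = \<beta> \<Longrightarrow> qc x y \<beta>" by simp

lemma qc_flip:
  assumes "qc x y \<alpha>" "\<alpha> \<noteq> 0" shows "qc y x (inverse \<alpha>)"
proof -
  have "y * x = sm (inverse \<alpha>) (sm \<alpha> (y * x))" using assms(2) by simp
  also have "\<dots> \<approx> sm (inverse \<alpha>) (x * y)"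
    by (rule cg_sm, rule cg_sym) (use assms(1) in \<open>simp add: qc_def\<close>)
  finally show ?thesis by (simp add: qc_def)
qed

lemma qc_push: "qc x y \<alpha> \<Longrightarrow> x * (y * w) \<approx> sm \<alpha> (y * (x * w))"
proof -
  assume "qc x y \<alpha>"
  then have "(x * y) * w \<approx> (sm \<alpha> (y * x)) * w" unfolding qc_def by (rule cg_rmult)
  then show ?thesis by (simp add: mult.assoc)
qed

lemma qc_mult_right:
  assumes "qc x y1 \<alpha>" "qc x y2 \<beta>" shows "qc x (y1 * y2) (\<alpha> * \<beta>)"
proof -
  have "x * (y1 * y2) \<approx> sm \<alpha> (y1 * (x * y2))" by (rule qc_push[OF assms(1)])
  also have "\<dots> \<approx> sm \<alpha> (y1 * (sm \<beta> (y2 * x)))"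
    by (intro cg_sm cg_lmult) (use assms(2) in \<open>simp add: qc_def\<close>)
  also have "\<dots> = sm (\<alpha> * \<beta>) (y1 * y2 * x)" by (simp add: mult.assoc)
  finally show ?thesis by (simp add: qc_def)
qed

lemma qc_mult_left:
  assumes "qc x1 y \<alpha>" "qc x2 y \<beta>" shows "qc (x1 * x2) y (\<alpha> * \<beta>)"
proof -
  have "x1 * x2 * y = x1 * (x2 * y)" by (simp add: mult.assoc)
  also have "\<dots> \<approx> x1 * (sm \<beta> (y * x2))"
    by (intro cg_lmult) (use assms(2) in \<open>simp add: qc_def\<close>)
  also have "\<dots> = sm \<beta> ((x1 * y) * x2)" by (simp add: mult.assoc)
  also have "\<dots> \<approx> sm \<beta> ((sm \<alpha> (y * x1)) * x2)"
    by (intro cg_sm cg_rmult) (use assms(1) in \<open>simp add: qc_def\<close>)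
  also have "\<dots> = sm (\<alpha> * \<beta>) (y * (x1 * x2))" by (simp add: mult.assoc mult.commute)
  finally show ?thesis by (simp add: qc_def)
qed

lemma qc_diff_right:
  assumes "qc x y1 \<alpha>" "qc x y2 \<alpha>" shows "qc x (y1 - y2) \<alpha>"
proof -
  have "x * (y1 - y2) = x * y1 - x * y2" by (simp add: algebra_simps)
  also have "\<dots> \<approx> sm \<alpha> (y1 * x) - sm \<alpha> (y2 * x)"
    by (rule cg_diff) (use assms in \<open>simp_all add: qc_def\<close>)
  also have "\<dots> = sm \<alpha> ((y1 - y2) * x)" by (simp add: algebra_simps sm_diff)
  finally show ?thesis by (simp add: qc_def)
qed

lemma qc_diff_left:
  assumes "qc x1 y \<alpha>" "qc x2 y \<alpha>" shows "qc (x1 - x2) y \<alpha>"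
proof -
  have "(x1 - x2) * y = x1 * y - x2 * y" by (simp add: algebra_simps)
  also have "\<dots> \<approx> sm \<alpha> (y * x1) - sm \<alpha> (y * x2)"
    by (rule cg_diff) (use assms in \<open>simp_all add: qc_def\<close>)
  also have "\<dots> = sm \<alpha> (y * (x1 - x2))" by (simp add: algebra_simps sm_diff)
  finally show ?thesis by (simp add: qc_def)
qed

lemma qc_sm_right: "qc x y \<alpha> \<Longrightarrow> qc x (sm c y) \<alpha>"
proof -
  assume "qc x y \<alpha>"
  then have "sm c (x * y) \<approx> sm c (sm \<alpha> (y * x))" unfolding qc_def by (rule cg_sm)
  then show ?thesis by (simp add: qc_def mult.commute)
qed
lemma qc_sm_left: "qc x y \<alpha> \<Longrightarrow> qc (sm c x) y \<alpha>"
proof -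
  assume "qc x y \<alpha>"
  then have "sm c (x * y) \<approx> sm c (sm \<alpha> (y * x))" unfolding qc_def by (rule cg_sm)
  then show ?thesis by (simp add: qc_def mult.commute)
qed
lemma qc_one_right: "qc x 1 1" by (simp add: qc_def)
lemma qc_one_left: "qc 1 x 1" by (simp add: qc_def)
lemma qc_refl: "qc x x 1" by (simp add: qc_def)

lemma qc_pow_right: "qc x y \<alpha> \<Longrightarrow> qc x (y ^ n) (\<alpha> ^ n)"
proof (induct n)
  case 0 then show ?case by (simp add: qc_one_right)
next
  case (Suc n) then show ?case using qc_mult_right[of x y \<alpha> "y ^ n" "\<alpha> ^ n"] by simp
qed
lemma qc_pow_left: "qc x y \<alpha> \<Longrightarrow> qc (x ^ n) y (\<alpha> ^ n)"
proof (induct n)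
  case 0 then show ?case by (simp add: qc_one_left)
next
  case (Suc n) then show ?case using qc_mult_left[of x y \<alpha> "x ^ n" "\<alpha> ^ n"] by simp
qed

lemma qc_inv_right:
  assumes uv: "u * v \<approx> 1" and vu: "v * u \<approx> 1" and x: "qc x u \<alpha>" and a: "\<alpha> \<noteq> 0"
  shows "qc x v (inverse \<alpha>)"
proof -
  have f: "qc u x (inverse \<alpha>)" by (rule qc_flip[OF x a])
  have "x * v = 1 * (x * v)" by simp
  also have "\<dots> \<approx> (v * u) * (x * v)" by (rule cg_rmult, rule cg_sym, rule vu)
  also have "\<dots> = v * (u * x) * v" by (simp add: mult.assoc)
  also have "\<dots> \<approx> v * (sm (inverse \<alpha>) (x * u)) * v"
    by (rule cg_ctx) (use f in \<open>simp add: qc_def\<close>)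
  also have "\<dots> = sm (inverse \<alpha>) (v * x * (u * v))" by (simp add: mult.assoc)
  also have "\<dots> \<approx> sm (inverse \<alpha>) (v * x * 1)" by (intro cg_sm cg_lmult) (rule uv)
  finally show ?thesis by (simp add: qc_def)
qed


lemma qc_ab: "qc pa pb (inverse q)" using r1 by (simp add: qc_def)
lemma qc_cd: "qc pc pd (inverse q)" using r2 by (simp add: qc_def)
lemma qc_ac: "qc pa pc q" using r3 by (simp add: qc_def)
lemma qc_bd: "qc pb pd q" using r4 by (simp add: qc_def)
lemma qc_ad: "qc pa pd 1" using r5 by (simp add: qc_def)
lemma qc_bc: "qc pb pc (q ^ 2)" using r6 by (simp add: qc_def)
lemma qc_ba: "qc pb pa q" using qc_flip[OF qc_ab] qnz by simp
lemma qc_dc: "qc pd pc q" using qc_flip[OF qc_cd] qnz by simp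
lemma qc_ca: "qc pc pa (inverse q)" using qc_flip[OF qc_ac] qnz by simp
lemma qc_db: "qc pd pb (inverse q)" using qc_flip[OF qc_bd] qnz by simp
lemma qc_da: "qc pd pa 1" using qc_flip[OF qc_ad] by simp
lemma qc_cb: "qc pc pb (inverse (q ^ 2))" using qc_flip[OF qc_bc] qnz by simp

lemma qc_D_gen:
  assumes "qc x pa a1" "qc x pd a2" "qc x pb b1" "qc x pc b2" "a1 * a2 = g" "b1 * b2 = g"
  shows "qc x (pD q) g"
proof -
  have 1: "qc x (pa * pd) g" using qc_mult_right[OF assms(1,2)] assms(5) by simp
  have 2: "qc x (sm (inverse q) (pb * pc)) g" using qc_sm_right[OF qc_mult_right[OF assms(3,4)]] assms(6) by simp
  show ?thesis unfolding pD_def by (rule qc_diff_right[OF 1 2])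
qed

lemma qc_aD: "qc pa (pD q) 1" by (rule qc_D_gen[OF qc_refl qc_ad qc_ab qc_ac]) (use qnz in auto)
lemma qc_dD: "qc pd (pD q) 1" by (rule qc_D_gen[OF qc_da qc_refl qc_db qc_dc]) (use qnz in auto)
lemma qc_bD: "qc pb (pD q) (q ^ 2)" by (rule qc_D_gen[OF qc_ba qc_bd qc_refl qc_bc]) (auto simp: power2_eq_square)
lemma qc_cD: "qc pc (pD q) (inverse (q ^ 2))" by (rule qc_D_gen[OF qc_ca qc_cd qc_cb qc_refl]) (auto simp: power2_eq_square)
lemma qc_eD: "qc pe (pD q) 1"
proof -
  have "pe * pD q \<approx> 1" by (rule r8)
  also have "1 \<approx> pD q * pe" by (rule cg_sym, rule r7)
  finally show ?thesis by (simp add: qc_def)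
qed
lemma qc_De: "qc (pD q) pe 1" using qc_flip[OF qc_eD] by simp

lemma qc_e_gen: "qc x (pD q) a \<Longrightarrow> a \<noteq> 0 \<Longrightarrow> qc x pe (inverse a)"
  by (rule qc_inv_right[OF r7 r8])

lemma qc_ae: "qc pa pe 1" using qc_e_gen[OF qc_aD] by simp
lemma qc_de: "qc pd pe 1" using qc_e_gen[OF qc_dD] by simp
lemma qc_be: "qc pb pe (inverse (q ^ 2))" using qc_e_gen[OF qc_bD] qnz by simp
lemma qc_ce: "qc pc pe (q ^ 2)" using qc_e_gen[OF qc_cD] qnz by simp
lemma qc_ea: "qc pe pa 1" using qc_flip[OF qc_ae] by simp
lemma qc_ed: "qc pe pd 1" using qc_flip[OF qc_de] by simp
lemma qc_Da: "qc (pD q) pa 1" using qc_flip[OF qc_aD] by simp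
lemma qc_Dd: "qc (pD q) pd 1" using qc_flip[OF qc_dD] by simp

lemma qc_Z_gen:
  assumes "qc x pe a1" "qc x pa a2" "qc x pd a3" "a1 * a2 * a3 = 1"
  shows "qc x pZ 1"
  unfolding pZ_def using qc_mult_right[OF qc_mult_right[OF assms(1,2)] assms(3)] assms(4) by simp

lemma qc_aZ: "qc pa pZ 1" by (rule qc_Z_gen[OF qc_ae qc_refl qc_ad]) simp
lemma qc_dZ: "qc pd pZ 1" by (rule qc_Z_gen[OF qc_de qc_da qc_refl]) simp
lemma qc_bZ: "qc pb pZ 1" by (rule qc_Z_gen[OF qc_be qc_ba qc_bd]) (use qnz in \<open>simp add: power2_eq_square field_simps\<close>)
lemma qc_cZ: "qc pc pZ 1" by (rule qc_Z_gen[OF qc_ce qc_ca qc_cd]) (use qnz in \<open>simp add: power2_eq_square field_simps\<close>)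
lemma qc_eZ: "qc pe pZ 1" by (rule qc_Z_gen[OF qc_refl qc_ea qc_ed]) simp
lemma qc_DZ: "qc (pD q) pZ 1" by (rule qc_Z_gen[OF qc_De qc_Da qc_Dd]) simp
lemma qc_ZD: "qc pZ (pD q) 1" using qc_flip[OF qc_DZ] by simp

definition Dp :: "int \<Rightarrow> P" where
  "Dp k = (if k \<ge> 0 then pD q ^ nat k else pe ^ nat (- k))"
definition Xp :: "int \<Rightarrow> P" where
  "Xp m = (if m > 0 then pa ^ nat m else if m < 0 then pd ^ nat (- m) else 1)"
definition Yp :: "int \<Rightarrow> P" where
  "Yp n = (if n > 0 then pc ^ nat n else if n < 0 then pb ^ nat (- n) else 1)"

lemma qc_Dp:
  assumes "qc x (pD q) a" "a \<noteq> 0" shows "qc x (Dp k) (a powi k)"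
proof (cases "k \<ge> 0")
  case True then show ?thesis using qc_pow_right[OF assms(1), of "nat k"]
    by (simp add: Dp_def power_int_def)
next
  case False then show ?thesis using qc_pow_right[OF qc_e_gen[OF assms], of "nat (-k)"]
    by (simp add: Dp_def power_int_def)
qed

lemma qc_Xp: "qc x pa a \<Longrightarrow> qc x pd a \<Longrightarrow> qc x (Xp m) (a ^ nat \<bar>m\<bar>)"
  using qc_pow_right[of x pa a "nat m"] qc_pow_right[of x pd a "nat (- m)"]
  by (auto simp: Xp_def qc_one_right)
lemma qc_Yp: "qc x pc a \<Longrightarrow> qc x pb a \<Longrightarrow> qc x (Yp n) (a ^ nat \<bar>n\<bar>)"
  using qc_pow_right[of x pc a "nat n"] qc_pow_right[of x pb a "nat (- n)"]
  by (auto simp: Yp_def qc_one_right)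
lemma qc_Xp_left: "qc pa y a \<Longrightarrow> qc pd y a \<Longrightarrow> qc (Xp m) y (a ^ nat \<bar>m\<bar>)"
  using qc_pow_left[of pa y a "nat m"] qc_pow_left[of pd y a "nat (- m)"]
  by (auto simp: Xp_def qc_one_left)

lemma Dp_D: "Dp k * pD q \<approx> Dp (k + 1)"
proof (cases "k \<ge> 0")
  case True
  then have "Dp k * pD q = Dp (k + 1)"
    by (simp add: Dp_def nat_add_distrib power_Suc2[symmetric])
  then show ?thesis by simp
next
  case False
  then obtain j where j: "nat (- k) = Suc j" by (cases "nat (-k)") auto
  have "Dp k * pD q = pe ^ j * (pe * pD q)" using False j by (simp add: Dp_def power_Suc2 mult.assoc del: power_Suc)
  also have "\<dots> \<approx> pe ^ j * 1" by (intro cg_lmult r8)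
  also have "j = nat (- k - 1)" using j by arith
  then have "pe ^ j * 1 = Dp (k + 1)" using False j by (auto simp: Dp_def)
  finally show ?thesis .
qed

lemma Dp_e: "Dp k * pe \<approx> Dp (k - 1)"
proof (cases "k > 0")
  case False
  then have "nat (- (k - 1)) = Suc (nat (- k))" by arith
  then have "Dp k * pe = Dp (k - 1)"
    using False by (simp add: Dp_def power_Suc2[symmetric] del: power_Suc)
  then show ?thesis by simp
next
  case True
  then obtain j where j: "nat k = Suc j" by (cases "nat k") auto
  have "Dp k * pe = pD q ^ j * (pD q * pe)" using True j by (simp add: Dp_def power_Suc2 mult.assoc del: power_Suc)
  also have "\<dots> \<approx> pD q ^ j * 1" by (intro cg_lmult r7)
  also have "j = nat (k - 1)" using j by arith
  then have "pD q ^ j * 1 = Dp (k - 1)" using True j by (auto simp: Dp_def)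
  finally show ?thesis .
qed

lemma e_Dp: "pe * Dp k \<approx> Dp (k - 1)"
proof (cases "k > 0")
  case False
  then have "nat (- (k - 1)) = Suc (nat (- k))" by arith
  then have "pe * Dp k = Dp (k - 1)"
    using False by (simp add: Dp_def)
  then show ?thesis by simp
next
  case True
  then obtain j where j: "nat k = Suc j" by (cases "nat k") auto
  have "pe * Dp k = (pe * pD q) * pD q ^ j" using True j by (simp add: Dp_def mult.assoc)
  also have "\<dots> \<approx> 1 * pD q ^ j" by (intro cg_rmult r8)
  also have "j = nat (k - 1)" using j by arith
  then have "1 * pD q ^ j = Dp (k - 1)" using True j by (auto simp: Dp_def)
  finally show ?thesis .
qed


lemma red_ad: "pa * pd \<approx> pD q * pZ"
proof -
  have "pD q * pZ = (pD q * pe) * (pa * pd)" by (simp add: pZ_def mult.assoc)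
  also have "\<dots> \<approx> 1 * (pa * pd)" by (intro cg_rmult r7)
  finally show ?thesis by (simp add: cg_sym)
qed

lemma red_da: "pd * pa \<approx> pD q * pZ"
  using cg_trans[OF cg_sym[OF r5] red_ad] .

lemma red_bc: "pb * pc \<approx> sm q (pD q * pZ - pD q)"
proof -
  have "sm (inverse q) (pb * pc) = pa * pd - pD q" by (simp add: pD_def)
  moreover have "pb * pc = sm q (sm (inverse q) (pb * pc))" using qnz by simp
  ultimately have "pb * pc = sm q (pa * pd - pD q)" by simp
  also have "\<dots> \<approx> sm q (pD q * pZ - pD q)" by (intro cg_sm cg_diff red_ad cg_refl)
  finally show ?thesis .
qed

lemma red_cb: "pc * pb \<approx> sm (inverse q) (pD q * pZ - pD q)"
proof -
  have "pc * pb \<approx> sm (inverse (q ^ 2)) (pb * pc)" using qc_cb by (simp add: qc_def)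
  also have "\<dots> \<approx> sm (inverse (q ^ 2)) (sm q (pD q * pZ - pD q))" by (intro cg_sm red_bc)
  also have "\<dots> = sm (inverse q) (pD q * pZ - pD q)" using qnz by (simp add: power2_eq_square field_simps)
  finally show ?thesis .
qed

end

context qrel begin
definition M :: "int \<times> nat \<times> int \<times> int \<Rightarrow> P" where
  "M i = (case i of (k, l, m, n) \<Rightarrow> Dp k * (pZ ^ l * (Xp m * Yp n)))"

definition insp :: "P \<Rightarrow> bool" where
  "insp x \<longleftrightarrow> (\<exists>c T. finite T \<and> x \<approx> (\<Sum>i\<in>T. sm (c i) (M i)))"

lemma sm_sum: "sm a (\<Sum>i\<in>T. f i) = (\<Sum>i\<in>T. sm a (f i))"
  by (simp add: sm_def sum_distrib_left)
lemma sm_plus_scal: "sm (a + b) x = sm a x + sm b x"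
  unfolding sm_def sc_add[symmetric] by (rule distrib_right)
lemma sm_zero_scal [simp]: "sm 0 x = 0"
  by (simp add: sm_def)

lemma insp_M: "insp (M i)"
  unfolding insp_def by (rule exI[of _ "\<lambda>_. 1"], rule exI[of _ "{i}"]) simp

lemma insp_cg: "x \<approx> y \<Longrightarrow> insp y \<Longrightarrow> insp x"
proof -
  assume xy: "x \<approx> y" and "insp y"
  then obtain c T where "finite T" "y \<approx> (\<Sum>i\<in>T. sm (c i) (M i))" unfolding insp_def by blast
  then show ?thesis unfolding insp_def using cg_trans[OF xy] by blast
qed

lemma insp_sm: "insp x \<Longrightarrow> insp (sm a x)"
proof -
  assume "insp x"
  then obtain c T where T: "finite T" "x \<approx> (\<Sum>i\<in>T. sm (c i) (M i))" unfolding insp_def by blast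
  then have "sm a x \<approx> (\<Sum>i\<in>T. sm (a * c i) (M i))" using cg_sm[OF T(2), of a] by (simp add: sm_sum)
  then show ?thesis using T(1) unfolding insp_def by (intro exI[of _ "\<lambda>i. a * c i"] exI[of _ T]) simp
qed

lemma insp_add: "insp x \<Longrightarrow> insp y \<Longrightarrow> insp (x + y)"
proof -
  assume "insp x" "insp y"
  then obtain c1 T1 c2 T2 where T: "finite T1" "x \<approx> (\<Sum>i\<in>T1. sm (c1 i) (M i))"
    "finite T2" "y \<approx> (\<Sum>i\<in>T2. sm (c2 i) (M i))" unfolding insp_def by blast
  define c where "c i = (if i \<in> T1 then c1 i else 0) + (if i \<in> T2 then c2 i else 0)" for i
  have pt: "sm (c i) (M i) = (if i \<in> T1 then sm (c1 i) (M i) else 0) + (if i \<in> T2 then sm (c2 i) (M i) else 0)" for i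
    by (auto simp: c_def sm_plus_scal)
  have "(\<Sum>i\<in>T1 \<union> T2. sm (c i) (M i)) =
        (\<Sum>i\<in>T1 \<union> T2. (if i \<in> T1 then sm (c1 i) (M i) else 0)) + (\<Sum>i\<in>T1 \<union> T2. (if i \<in> T2 then sm (c2 i) (M i) else 0))"
    unfolding pt by (rule sum.distrib)
  also have "\<dots> = (\<Sum>i\<in>T1. sm (c1 i) (M i)) + (\<Sum>i\<in>T2. sm (c2 i) (M i))"
    using T(1,3) by (simp add: sum.inter_restrict[symmetric] Int_absorb1 Int_absorb2)
  finally have "x + y \<approx> (\<Sum>i\<in>T1 \<union> T2. sm (c i) (M i))" using cg_add[OF T(2) T(4)] by simp
  then show ?thesis using T(1,3) unfolding insp_def by (intro exI[of _ c] exI[of _ "T1 \<union> T2"]) simp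
qed

lemma insp_zero: "insp 0"
  unfolding insp_def by (rule exI[of _ "\<lambda>_. 0"], rule exI[of _ "{}"]) simp

lemma insp_diff: "insp x \<Longrightarrow> insp y \<Longrightarrow> insp (x - y)"
proof -
  assume "insp x" "insp y"
  then have "insp (x + sm (-1) y)" by (intro insp_add insp_sm)
  moreover have "sm (-1) y = - y" by (rule poly_mapping_eqI) (simp add: sm_def lookup_sc_mult)
  then have "x + sm (-1) y = x - y" by simp
  ultimately show ?thesis by simp
qed

lemma insp_sum: "finite T \<Longrightarrow> (\<And>i. i \<in> T \<Longrightarrow> insp (f i)) \<Longrightarrow> insp (\<Sum>i\<in>T. f i)"
  by (induct rule: finite_induct) (auto intro: insp_add insp_zero)

lemma insp_lmult:
  assumes g: "\<And>i. insp (g * M i)" and x: "insp x" shows "insp (g * x)"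
proof -
  obtain c T where T: "finite T" "x \<approx> (\<Sum>i\<in>T. sm (c i) (M i))" using x unfolding insp_def by blast
  have "g * x \<approx> g * (\<Sum>i\<in>T. sm (c i) (M i))" by (rule cg_lmult[OF T(2)])
  also have "\<dots> = (\<Sum>i\<in>T. sm (c i) (g * M i))" by (simp add: sum_distrib_left)
  finally show ?thesis
    by (rule insp_cg) (intro insp_sum T(1) insp_sm g)
qed


lemma pushDZ:
  assumes "qc x (Dp k) \<alpha>" "qc x pZ 1"
  shows "x * M (k, l, m, n) \<approx> sm \<alpha> (Dp k * (pZ ^ l * (x * (Xp m * Yp n))))"
proof -
  have z: "qc x (pZ ^ l) 1" using qc_pow_right[OF assms(2), of l] by simp
  have "x * M (k, l, m, n) = x * (Dp k * (pZ ^ l * (Xp m * Yp n)))" by (simp add: M_def)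
  also have "\<dots> \<approx> sm \<alpha> (Dp k * (x * (pZ ^ l * (Xp m * Yp n))))" by (rule qc_push[OF assms(1)])
  also have "\<dots> \<approx> sm \<alpha> (Dp k * (sm 1 (pZ ^ l * (x * (Xp m * Yp n)))))" by (intro cg_sm cg_lmult qc_push[OF z])
  finally show ?thesis by simp
qed

lemma absorb: "Dp k * (pZ ^ l * (pD q * (pZ ^ e * W))) \<approx> Dp (k + 1) * (pZ ^ (l + e) * W)"
proof -
  have z: "qc (pZ ^ l) (pD q) 1" using qc_pow_left[OF qc_ZD, of l] by simp
  have "Dp k * (pZ ^ l * (pD q * (pZ ^ e * W))) \<approx> Dp k * (sm 1 (pD q * (pZ ^ l * (pZ ^ e * W))))"
    by (intro cg_lmult qc_push[OF z])
  also have "\<dots> = (Dp k * pD q) * (pZ ^ (l + e) * W)" by (simp add: mult.assoc power_add)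
  also have "\<dots> \<approx> Dp (k + 1) * (pZ ^ (l + e) * W)" by (intro cg_rmult Dp_D)
  finally show ?thesis .
qed

lemma passX: "Xp m * (pD q * (pZ ^ e * W)) \<approx> pD q * (pZ ^ e * (Xp m * W))"
proof -
  have d: "qc (Xp m) (pD q) 1" using qc_Xp_left[OF qc_aD qc_dD, of m] by simp
  have a: "qc pa (pZ ^ e) 1" using qc_pow_right[OF qc_aZ, of e] by simp
  have b: "qc pd (pZ ^ e) 1" using qc_pow_right[OF qc_dZ, of e] by simp
  have z: "qc (Xp m) (pZ ^ e) 1" using qc_Xp_left[OF a b, of m] by simp
  have "Xp m * (pD q * (pZ ^ e * W)) \<approx> sm 1 (pD q * (Xp m * (pZ ^ e * W)))" by (rule qc_push[OF d])
  also have "\<dots> \<approx> sm 1 (pD q * (sm 1 (pZ ^ e * (Xp m * W))))" by (intro cg_sm cg_lmult qc_push[OF z])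
  finally show ?thesis by simp
qed

lemma tailX: "Dp k * (pZ ^ l * (Xp m * (pD q * (pZ ^ e * Yp n)))) \<approx> M (k + 1, l + e, m, n)"
proof -
  have "Dp k * (pZ ^ l * (Xp m * (pD q * (pZ ^ e * Yp n)))) \<approx> Dp k * (pZ ^ l * (pD q * (pZ ^ e * (Xp m * Yp n))))"
    by (intro cg_lmult passX)
  also have "\<dots> \<approx> Dp (k + 1) * (pZ ^ (l + e) * (Xp m * Yp n))" by (rule absorb)
  finally show ?thesis by (simp add: M_def)
qed

lemma aXp_pos: "m \<ge> 0 \<Longrightarrow> pa * Xp m = Xp (m + 1)"
proof -
  assume "m \<ge> 0"
  then have "nat (m + 1) = Suc (nat m)" by arith
  then show ?thesis using \<open>m \<ge> 0\<close> by (auto simp: Xp_def)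
qed

lemma dXp_neg: "m \<le> 0 \<Longrightarrow> pd * Xp m = Xp (m - 1)"
proof -
  assume "m \<le> 0"
  then have "nat (- (m - 1)) = Suc (nat (- m))" by arith
  then show ?thesis using \<open>m \<le> 0\<close> by (auto simp: Xp_def)
qed

lemma cYp_pos: "n \<ge> 0 \<Longrightarrow> pc * Yp n = Yp (n + 1)"
proof -
  assume "n \<ge> 0"
  then have "nat (n + 1) = Suc (nat n)" by arith
  then show ?thesis using \<open>n \<ge> 0\<close> by (auto simp: Yp_def)
qed

lemma bYp_neg: "n \<le> 0 \<Longrightarrow> pb * Yp n = Yp (n - 1)"
proof -
  assume "n \<le> 0"
  then have "nat (- (n - 1)) = Suc (nat (- n))" by arith
  then show ?thesis using \<open>n \<le> 0\<close> by (auto simp: Yp_def)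
qed

lemma aXp_neg: "m < 0 \<Longrightarrow> pa * Xp m \<approx> pD q * (pZ * Xp (m + 1))"
proof -
  assume m: "m < 0"
  then obtain j where j: "nat (- m) = Suc j" by (cases "nat (- m)") auto
  then have j2: "j = nat (- (m + 1))" by arith
  have xj: "Xp (m + 1) = pd ^ j"
  proof (cases "m + 1 < 0")
    case True then show ?thesis using j2 by (simp add: Xp_def)
  next
    case False then have "m + 1 = 0" using m by arith
    then show ?thesis using j2 by (simp add: Xp_def)
  qed
  have "pa * Xp m = (pa * pd) * pd ^ j" using m j by (simp add: Xp_def mult.assoc)
  also have "\<dots> \<approx> (pD q * pZ) * pd ^ j" by (intro cg_rmult red_ad)
  finally show ?thesis by (simp add: xj mult.assoc)
qed


lemma dXp_pos: "m > 0 \<Longrightarrow> pd * Xp m \<approx> pD q * (pZ * Xp (m - 1))"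
proof -
  assume m: "m > 0"
  then obtain j where j: "nat m = Suc j" by (cases "nat m") auto
  then have j2: "j = nat (m - 1)" by arith
  have xj: "Xp (m - 1) = pa ^ j"
  proof (cases "m - 1 > 0")
    case True then show ?thesis using j2 by (simp add: Xp_def)
  next
    case False then have "m - 1 = 0" using m by arith
    then show ?thesis using j2 by (simp add: Xp_def)
  qed
  have "pd * Xp m = (pd * pa) * pa ^ j" using m j by (simp add: Xp_def mult.assoc)
  also have "\<dots> \<approx> (pD q * pZ) * pa ^ j" by (intro cg_rmult red_da)
  finally show ?thesis by (simp add: xj mult.assoc)
qed

lemma cYp_neg: "n < 0 \<Longrightarrow> pc * Yp n \<approx> sm (inverse q) (pD q * (pZ * Yp (n + 1)) - pD q * Yp (n + 1))"
proof -
  assume n: "n < 0"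
  then obtain j where j: "nat (- n) = Suc j" by (cases "nat (- n)") auto
  then have j2: "j = nat (- (n + 1))" by arith
  have yj: "Yp (n + 1) = pb ^ j"
  proof (cases "n + 1 < 0")
    case True then show ?thesis using j2 by (simp add: Yp_def)
  next
    case False then have "n + 1 = 0" using n by arith
    then show ?thesis using j2 by (simp add: Yp_def)
  qed
  have "pc * Yp n = (pc * pb) * pb ^ j" using n j by (simp add: Yp_def mult.assoc)
  also have "\<dots> \<approx> (sm (inverse q) (pD q * pZ - pD q)) * pb ^ j" by (intro cg_rmult red_cb)
  finally show ?thesis unfolding yj by (simp add: mult.assoc algebra_simps)
qed

lemma bYp_pos: "n > 0 \<Longrightarrow> pb * Yp n \<approx> sm q (pD q * (pZ * Yp (n - 1)) - pD q * Yp (n - 1))"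
proof -
  assume n: "n > 0"
  then obtain j where j: "nat n = Suc j" by (cases "nat n") auto
  then have j2: "j = nat (n - 1)" by arith
  have yj: "Yp (n - 1) = pc ^ j"
  proof (cases "n - 1 > 0")
    case True then show ?thesis using j2 by (simp add: Yp_def)
  next
    case False then have "n - 1 = 0" using n by arith
    then show ?thesis using j2 by (simp add: Yp_def)
  qed
  have "pb * Yp n = (pb * pc) * pc ^ j" using n j by (simp add: Yp_def mult.assoc)
  also have "\<dots> \<approx> (sm q (pD q * pZ - pD q)) * pc ^ j" by (intro cg_rmult red_bc)
  finally show ?thesis unfolding yj by (simp add: mult.assoc algebra_simps)
qed

lemma cl_e: "insp (pe * M i)"
proof -
  obtain k l m n where i: "i = (k, l, m, n)" by (cases i) auto
  have "pe * M i = (pe * Dp k) * (pZ ^ l * (Xp m * Yp n))" by (simp add: i M_def mult.assoc)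
  also have "\<dots> \<approx> Dp (k - 1) * (pZ ^ l * (Xp m * Yp n))" by (intro cg_rmult e_Dp)
  also have "\<dots> = M (k - 1, l, m, n)" by (simp add: M_def)
  finally show ?thesis by (rule insp_cg) (rule insp_M)
qed

lemma cl_a: "insp (pa * M i)"
proof -
  obtain k l m n where i: "i = (k, l, m, n)" by (cases i) auto
  have h: "pa * M i \<approx> Dp k * (pZ ^ l * (pa * (Xp m * Yp n)))"
    using pushDZ[OF qc_Dp[OF qc_aD one_neq_zero] qc_aZ, of k l m n] by (simp add: i)
  show ?thesis
  proof (cases "m \<ge> 0")
    case True
    have "Dp k * (pZ ^ l * (pa * (Xp m * Yp n))) = M (k, l, m + 1, n)"
      using aXp_pos[OF True] by (simp add: M_def mult.assoc[symmetric])
    then show ?thesis using h by (metis insp_cg insp_M)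
  next
    case False
    have "Dp k * (pZ ^ l * (pa * (Xp m * Yp n))) = Dp k * (pZ ^ l * ((pa * Xp m) * Yp n))"
      by (simp add: mult.assoc)
    also have "\<dots> \<approx> Dp k * (pZ ^ l * ((pD q * (pZ * Xp (m + 1))) * Yp n))"
      by (intro cg_lmult cg_rmult aXp_neg) (use False in simp)
    also have "\<dots> = Dp k * (pZ ^ l * (pD q * (pZ ^ 1 * (Xp (m + 1) * Yp n))))"
      by (simp add: mult.assoc)
    also have "\<dots> \<approx> Dp (k + 1) * (pZ ^ (l + 1) * (Xp (m + 1) * Yp n))" by (rule absorb)
    also have "\<dots> = M (k + 1, l + 1, m + 1, n)" by (simp add: M_def)
    finally show ?thesis using h by (metis insp_cg insp_M)
  qed
qed

lemma cl_d: "insp (pd * M i)"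
proof -
  obtain k l m n where i: "i = (k, l, m, n)" by (cases i) auto
  have h: "pd * M i \<approx> Dp k * (pZ ^ l * (pd * (Xp m * Yp n)))"
    using pushDZ[OF qc_Dp[OF qc_dD one_neq_zero] qc_dZ, of k l m n] by (simp add: i)
  show ?thesis
  proof (cases "m \<le> 0")
    case True
    have "Dp k * (pZ ^ l * (pd * (Xp m * Yp n))) = M (k, l, m - 1, n)"
      using dXp_neg[OF True] by (simp add: M_def mult.assoc[symmetric])
    then show ?thesis using h by (metis insp_cg insp_M)
  next
    case False
    have "Dp k * (pZ ^ l * (pd * (Xp m * Yp n))) = Dp k * (pZ ^ l * ((pd * Xp m) * Yp n))"
      by (simp add: mult.assoc)
    also have "\<dots> \<approx> Dp k * (pZ ^ l * ((pD q * (pZ * Xp (m - 1))) * Yp n))"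
      by (intro cg_lmult cg_rmult dXp_pos) (use False in simp)
    also have "\<dots> = Dp k * (pZ ^ l * (pD q * (pZ ^ 1 * (Xp (m - 1) * Yp n))))"
      by (simp add: mult.assoc)
    also have "\<dots> \<approx> Dp (k + 1) * (pZ ^ (l + 1) * (Xp (m - 1) * Yp n))" by (rule absorb)
    also have "\<dots> = M (k + 1, l + 1, m - 1, n)" by (simp add: M_def)
    finally show ?thesis using h by (metis insp_cg insp_M)
  qed
qed


lemma cl_c: "insp (pc * M i)"
proof -
  obtain k l m n where i: "i = (k, l, m, n)" by (cases i) auto
  define \<alpha> where "\<alpha> = inverse (q ^ 2) powi k"
  define \<beta> where "\<beta> = inverse q ^ nat \<bar>m\<bar>"
  have qD: "qc pc (Dp k) \<alpha>" unfolding \<alpha>_def by (rule qc_Dp[OF qc_cD]) (use qnz in simp)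
  have h: "pc * M i \<approx> sm \<alpha> (Dp k * (pZ ^ l * (pc * (Xp m * Yp n))))"
    using pushDZ[OF qD qc_cZ, of l m n] by (simp add: i)
  have x: "qc pc (Xp m) \<beta>" unfolding \<beta>_def by (rule qc_Xp[OF qc_ca qc_cd])
  have h2: "pc * M i \<approx> sm \<alpha> (Dp k * (pZ ^ l * (sm \<beta> (Xp m * (pc * Yp n)))))"
    by (rule cg_trans[OF h]) (intro cg_sm cg_lmult qc_push[OF x])
  show ?thesis
  proof (cases "n \<ge> 0")
    case True
    have "sm \<alpha> (Dp k * (pZ ^ l * (sm \<beta> (Xp m * (pc * Yp n))))) = sm (\<alpha> * \<beta>) (M (k, l, m, n + 1))"
      using cYp_pos[OF True] by (simp add: M_def)
    then show ?thesis using h2 by (metis insp_cg insp_M insp_sm)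
  next
    case False
    let ?Y = "Yp (n + 1)"
    have "pc * M i \<approx> sm \<alpha> (Dp k * (pZ ^ l * (sm \<beta> (Xp m * (sm (inverse q) (pD q * (pZ * ?Y) - pD q * ?Y))))))"
      by (rule cg_trans[OF h2]) (intro cg_sm cg_lmult cYp_neg, use False in simp)
    also have "\<dots> = sm (\<alpha> * (\<beta> * inverse q)) (Dp k * (pZ ^ l * (Xp m * (pD q * (pZ ^ 1 * ?Y)))) -
                                             Dp k * (pZ ^ l * (Xp m * (pD q * (pZ ^ 0 * ?Y)))))"
      by (simp add: right_diff_distrib sm_diff)
    finally show ?thesis
      by (rule insp_cg) (intro insp_sm insp_diff insp_cg[OF tailX] insp_M)
  qed
qed

lemma cl_b: "insp (pb * M i)"
proof -
  obtain k l m n where i: "i = (k, l, m, n)" by (cases i) auto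
  define \<alpha> where "\<alpha> = (q ^ 2) powi k"
  define \<beta> where "\<beta> = q ^ nat \<bar>m\<bar>"
  have qD: "qc pb (Dp k) \<alpha>" unfolding \<alpha>_def by (rule qc_Dp[OF qc_bD]) (use qnz in simp)
  have h: "pb * M i \<approx> sm \<alpha> (Dp k * (pZ ^ l * (pb * (Xp m * Yp n))))"
    using pushDZ[OF qD qc_bZ, of l m n] by (simp add: i)
  have x: "qc pb (Xp m) \<beta>" unfolding \<beta>_def by (rule qc_Xp[OF qc_ba qc_bd])
  have h2: "pb * M i \<approx> sm \<alpha> (Dp k * (pZ ^ l * (sm \<beta> (Xp m * (pb * Yp n)))))"
    by (rule cg_trans[OF h]) (intro cg_sm cg_lmult qc_push[OF x])
  show ?thesis
  proof (cases "n \<le> 0")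
    case True
    have "sm \<alpha> (Dp k * (pZ ^ l * (sm \<beta> (Xp m * (pb * Yp n))))) = sm (\<alpha> * \<beta>) (M (k, l, m, n - 1))"
      using bYp_neg[OF True] by (simp add: M_def)
    then show ?thesis using h2 by (metis insp_cg insp_M insp_sm)
  next
    case False
    let ?Y = "Yp (n - 1)"
    have "pb * M i \<approx> sm \<alpha> (Dp k * (pZ ^ l * (sm \<beta> (Xp m * (sm q (pD q * (pZ * ?Y) - pD q * ?Y))))))"
      by (rule cg_trans[OF h2]) (intro cg_sm cg_lmult bYp_pos, use False in simp)
    also have "\<dots> = sm (\<alpha> * (\<beta> * q)) (Dp k * (pZ ^ l * (Xp m * (pD q * (pZ ^ 1 * ?Y)))) -
                                             Dp k * (pZ ^ l * (Xp m * (pD q * (pZ ^ 0 * ?Y)))))"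
      by (simp add: right_diff_distrib sm_diff)
    finally show ?thesis
      by (rule insp_cg) (intro insp_sm insp_diff insp_cg[OF tailX] insp_M)
  qed
qed

lemma cl_gen: "insp (single [g] 1 * M i)"
  by (cases g) (auto simp: cl_a cl_b cl_c cl_d cl_e
      pa_def[symmetric] pb_def[symmetric] pc_def[symmetric] pd_def[symmetric] pe_def[symmetric])

lemma M_one: "M (0, 0, 0, 0) = 1"
  by (simp add: M_def Dp_def Xp_def Yp_def)

lemma insp_word: "insp (single w 1)"
proof (induct w)
  case Nil
  have "single [] (1::complex) = (1::P)" using single_one[where 'a="gen list" and 'b=complex] by simp
  then show ?case using insp_M[of "(0, 0, 0, 0)"] by (simp add: M_one)
next
  case (Cons g w)
  have "single (g # w) 1 = single [g] 1 * single w (1::complex)" by (simp add: mult_single)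
  then show ?case using insp_lmult[OF cl_gen Cons] by simp
qed

lemma insp_all: "insp p"
proof -
  have "p = (\<Sum>w\<in>keys p. sm (lookup p w) (single w 1))"
    apply (subst P_as_sum[of p])
    by (rule sum.cong) (auto simp: sm_def sc_def mult_single)
  also have "insp \<dots>" by (intro insp_sum finite_keys insp_sm insp_word)
  finally show ?thesis .
qed

end


type_synonym idx1 = "int \<times> nat \<times> int \<times> int"

definition Q :: "complex \<Rightarrow> int \<Rightarrow> complex" where "Q q e = q powi e"

lemma Q_add: "q \<noteq> 0 \<Longrightarrow> Q q a * Q q b = Q q (a + b)"
  by (simp add: Q_def power_int_add)
lemma Q_add2: "q \<noteq> 0 \<Longrightarrow> Q q a * (Q q b * z) = Q q (a + b) * z"
  by (simp add: Q_add mult.assoc[symmetric])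
lemma Q_eqI: "a = b \<Longrightarrow> Q q a * z = Q q b * z" by simp

definition opA :: "idx1 vec \<Rightarrow> idx1 vec" where
  "opA y = (\<lambda>(k, l, m, n). if m > 0 then y (k, l, m - 1, n) else if l > 0 then y (k - 1, l - 1, m - 1, n) else 0)"
definition opDd :: "idx1 vec \<Rightarrow> idx1 vec" where
  "opDd y = (\<lambda>(k, l, m, n). if m < 0 then y (k, l, m + 1, n) else if l > 0 then y (k - 1, l - 1, m + 1, n) else 0)"
definition opE :: "idx1 vec \<Rightarrow> idx1 vec" where
  "opE y = (\<lambda>(k, l, m, n). y (k + 1, l, m, n))"
definition opC :: "complex \<Rightarrow> idx1 vec \<Rightarrow> idx1 vec" where
  "opC q y = (\<lambda>(k, l, m, n). if n > 0 then Q q (- 2 * k - \<bar>m\<bar>) * y (k, l, m, n - 1)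
      else Q q (1 - 2 * k - \<bar>m\<bar>) * ((if l > 0 then y (k - 1, l - 1, m, n - 1) else 0) - y (k - 1, l, m, n - 1)))"
definition opB :: "complex \<Rightarrow> idx1 vec \<Rightarrow> idx1 vec" where
  "opB q y = (\<lambda>(k, l, m, n). if n < 0 then Q q (2 * k + \<bar>m\<bar>) * y (k, l, m, n + 1)
      else Q q (2 * k + \<bar>m\<bar> - 1) * ((if l > 0 then y (k - 1, l - 1, m, n + 1) else 0) - y (k - 1, l, m, n + 1)))"

lemma AB: assumes q: "q \<noteq> 0"
  shows "opA (opB q y) x = inverse q * opB q (opA y) x"
proof -
  obtain k l m n where x: "x = (k, l, m, n)" by (cases x) auto
  have iq: "inverse q = Q q (- 1)" by (simp add: Q_def)
  show ?thesis unfolding x iq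
    by (auto simp: opA_def opB_def Q_add2[OF q] algebra_simps intro!: Q_eqI)
qed


lemma Q_plus: "q \<noteq> 0 \<Longrightarrow> Q q (a + b) = Q q a * Q q b" by (simp add: Q_def power_int_add)
lemma Q_minus: "q \<noteq> 0 \<Longrightarrow> Q q (a - b) = Q q a / Q q b" by (simp add: Q_def power_int_diff)
lemma Q_uminus: "Q q (- a) = inverse (Q q a)" by (simp add: Q_def power_int_minus)
lemma Q_times2: "Q q (2 * a) = Q q a * Q q a" by (simp add: Q_def power_int_mult mult.commute[of 2] power2_eq_square)
lemma Q_times2': "Q q (a * 2) = Q q a * Q q a" by (simp add: Q_def power_int_mult power2_eq_square)
lemma Q_num: "Q q (numeral n) = q ^ numeral n" by (simp add: Q_def)
lemma Q_one: "Q q 1 = q" by (simp add: Q_def)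
lemma Q_zero: "Q q 0 = 1" by (simp add: Q_def)
lemma Q_m1: "Q q (- 1) = inverse q" by (simp add: Q_def)
lemma Q_nz: "q \<noteq> 0 \<Longrightarrow> Q q a \<noteq> 0" by (simp add: Q_def)

lemmas Qexpq = Q_plus Q_minus
lemmas Qexp = Q_uminus Q_times2 Q_times2' Q_num Q_one Q_zero Q_m1

lemma rAB: assumes q: "q \<noteq> 0"
  shows "opA (opB q y) x = Q q (-1) * opB q (opA y) x"
proof -
  obtain k l m n where x: "x = (k, l, m, n)" by (cases x) auto
  have nz: "Q q k \<noteq> 0" "Q q m \<noteq> 0" using q by (simp_all add: Q_nz)
  show ?thesis unfolding x
    by (auto simp: opA_def opB_def opC_def opDd_def opE_def Qexpq[OF q] Qexp nz q field_simps power2_eq_square power3_eq_cube power4_eq_xxxx split: abs_split)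
qed

lemma rCDd: assumes q: "q \<noteq> 0"
  shows "opC q (opDd y) x = Q q (-1) * opDd (opC q y) x"
proof -
  obtain k l m n where x: "x = (k, l, m, n)" by (cases x) auto
  have nz: "Q q k \<noteq> 0" "Q q m \<noteq> 0" using q by (simp_all add: Q_nz)
  show ?thesis unfolding x
    by (auto simp: opA_def opB_def opC_def opDd_def opE_def Qexpq[OF q] Qexp nz q field_simps power2_eq_square power3_eq_cube power4_eq_xxxx split: abs_split)
qed

lemma rAC: assumes q: "q \<noteq> 0"
  shows "opA (opC q y) x = Q q 1 * opC q (opA y) x"
proof -
  obtain k l m n where x: "x = (k, l, m, n)" by (cases x) auto
  have nz: "Q q k \<noteq> 0" "Q q m \<noteq> 0" using q by (simp_all add: Q_nz)
  show ?thesis unfolding x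
    by (auto simp: opA_def opB_def opC_def opDd_def opE_def Qexpq[OF q] Qexp nz q field_simps power2_eq_square power3_eq_cube power4_eq_xxxx split: abs_split)
qed

lemma rBDd: assumes q: "q \<noteq> 0"
  shows "opB q (opDd y) x = Q q 1 * opDd (opB q y) x"
proof -
  obtain k l m n where x: "x = (k, l, m, n)" by (cases x) auto
  have nz: "Q q k \<noteq> 0" "Q q m \<noteq> 0" using q by (simp_all add: Q_nz)
  show ?thesis unfolding x
    by (auto simp: opA_def opB_def opC_def opDd_def opE_def Qexpq[OF q] Qexp nz q field_simps power2_eq_square power3_eq_cube power4_eq_xxxx split: abs_split)
qed

lemma rADd: assumes q: "q \<noteq> 0"
  shows "opA (opDd y) x = opDd (opA y) x + 0 * Q q 0"
proof -
  obtain k l m n where x: "x = (k, l, m, n)" by (cases x) auto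
  have nz: "Q q k \<noteq> 0" "Q q m \<noteq> 0" using q by (simp_all add: Q_nz)
  show ?thesis unfolding x
    by (auto simp: opA_def opB_def opC_def opDd_def opE_def Qexpq[OF q] Qexp nz q field_simps power2_eq_square power3_eq_cube power4_eq_xxxx split: abs_split)
qed

lemma rBC: assumes q: "q \<noteq> 0"
  shows "opB q (opC q y) x = Q q 2 * opC q (opB q y) x"
proof -
  obtain k l m n where x: "x = (k, l, m, n)" by (cases x) auto
  have nz: "Q q k \<noteq> 0" "Q q m \<noteq> 0" using q by (simp_all add: Q_nz)
  show ?thesis unfolding x
    by (auto simp: opA_def opB_def opC_def opDd_def opE_def Qexpq[OF q] Qexp nz q field_simps power2_eq_square power3_eq_cube power4_eq_xxxx split: abs_split)
qed

lemma Dshift: assumes q: "q \<noteq> 0"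
  shows "opA (opDd y) x - Q q (-1) * opB q (opC q y) x = (case x of (k, l, m, n) \<Rightarrow> y (k - 1, l, m, n))"
proof -
  obtain k l m n where x: "x = (k, l, m, n)" by (cases x) auto
  have nz: "Q q k \<noteq> 0" "Q q m \<noteq> 0" using q by (simp_all add: Q_nz)
  show ?thesis unfolding x
    by (auto simp: opA_def opB_def opC_def opDd_def opE_def Qexpq[OF q] Qexp nz q field_simps power2_eq_square power3_eq_cube power4_eq_xxxx split: abs_split)
qed

lemma Zshift: assumes q: "q \<noteq> 0"
  shows "opE (opA (opDd y)) x = (case x of (k, l, m, n) \<Rightarrow> if l > 0 then y (k, l - 1, m, n) else 0) + 0 * Q q 0"
proof -
  obtain k l m n where x: "x = (k, l, m, n)" by (cases x) auto
  have nz: "Q q k \<noteq> 0" "Q q m \<noteq> 0" using q by (simp_all add: Q_nz)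
  show ?thesis unfolding x
    by (auto simp: opA_def opB_def opC_def opDd_def opE_def Qexpq[OF q] Qexp nz q field_simps power2_eq_square power3_eq_cube power4_eq_xxxx split: abs_split)
qed


lemma linop_opA: "linop opA" by (auto simp: linop_def opA_def fun_eq_iff)
lemma linop_opDd: "linop opDd" by (auto simp: linop_def opDd_def fun_eq_iff)
lemma linop_opE: "linop opE" by (auto simp: linop_def opE_def fun_eq_iff)
lemma linop_opB: "linop (opB q)" by (auto simp: linop_def opB_def fun_eq_iff algebra_simps)
lemma linop_opC: "linop (opC q)" by (auto simp: linop_def opC_def fun_eq_iff algebra_simps)

definition ops1 :: "complex \<Rightarrow> gen \<Rightarrow> idx1 vec \<Rightarrow> idx1 vec" where
  "ops1 q g = (case g of Ga \<Rightarrow> opA | Gb \<Rightarrow> opB q | Gc \<Rightarrow> opC q | Gd \<Rightarrow> opDd | GDi \<Rightarrow> opE)"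

lemma linop_ops1: "linop (ops1 q g)"
  by (cases g) (auto simp: ops1_def linop_opA linop_opB linop_opC linop_opDd linop_opE)

lemma rho_gen: "rho ops (single [g] 1) y = ops g y"
  by (simp add: rho_single)

lemma rho1_a: "rho (ops1 q) pa y = opA y" by (simp add: pa_def rho_gen ops1_def)
lemma rho1_b: "rho (ops1 q) pb y = opB q y" by (simp add: pb_def rho_gen ops1_def)
lemma rho1_c: "rho (ops1 q) pc y = opC q y" by (simp add: pc_def rho_gen ops1_def)
lemma rho1_d: "rho (ops1 q) pd y = opDd y" by (simp add: pd_def rho_gen ops1_def)
lemma rho1_e: "rho (ops1 q) pe y = opE y" by (simp add: pe_def rho_gen ops1_def)

lemma rho_sm: "(\<And>g. linop (ops g)) \<Longrightarrow> rho ops (sm c p) y = (\<lambda>x. c * rho ops p y x)"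
  by (simp add: sm_def rho_mult rho_sc)

lemmas rho1_simps = rho_mult[OF linop_ops1] rho_diff[OF linop_ops1] rho_sm[OF linop_ops1]
  rho1_a rho1_b rho1_c rho1_d rho1_e rho_one


lemma toP_ga: "toP ga = pa" by (simp add: toP_gen pa_def)
lemma toP_gb: "toP gb = pb" by (simp add: toP_gen pb_def)
lemma toP_gc: "toP gc = pc" by (simp add: toP_gen pc_def)
lemma toP_gd: "toP gd = pd" by (simp add: toP_gen pd_def)
lemma toP_gDi: "toP gDi = pe" by (simp add: toP_gen pe_def)

lemmas toP_simps = toP_ga toP_gb toP_gc toP_gd toP_gDi toP_mult toP_sub toP_scal toP_pow toP_add

lemma FA_qD [simp]: "qD q \<in> FA" by (simp add: qD_def)
lemma toP_qD: "toP (qD q) = pD q" by (simp add: qD_def toP_simps pD_def sm_def)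
lemma FA_qz [simp]: "qz \<in> FA" by (simp add: qz_def)
lemma toP_qz: "toP qz = pZ" by (simp add: qz_def toP_simps pZ_def)
lemma FA_Dpow [simp]: "Dpow q k \<in> FA" by (simp add: Dpow_def)
lemma FA_Xpow [simp]: "Xpow m \<in> FA" by (simp add: Xpow_def)
lemma FA_Ypow [simp]: "Ypow m \<in> FA" by (simp add: Ypow_def)
lemma FA_mono1 [simp]: "mono1 q i \<in> FA" by (cases i) (simp add: mono1_def)

context qrel begin
lemma toP_Dpow: "toP (Dpow q k) = Dp k" by (simp add: Dpow_def Dp_def toP_simps toP_qD)
lemma toP_Xpow: "toP (Xpow m) = Xp m" by (simp add: Xpow_def Xp_def toP_simps)
lemma toP_Ypow: "toP (Ypow m) = Yp m" by (simp add: Ypow_def Yp_def toP_simps)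
lemma toP_mono1: "toP (mono1 q i) = M i"
  by (cases i) (simp add: mono1_def M_def toP_simps toP_Dpow toP_qz toP_Xpow toP_Ypow mult.assoc)
end

definition R1 :: "complex \<Rightarrow> P set" where "R1 q = toP ` Urels q"

lemma Urels_FA: "Urels q \<subseteq> FA" by (auto simp: Urels_def)

lemma cg_of_rel: "f \<in> Urels q \<Longrightarrow> toP f = x - y \<Longrightarrow> cg (toP ` (Urels q \<union> X)) x y"
  unfolding cg_def by (metis UnI1 image_eqI pI.base)

lemma qrel_gen: "q \<noteq> 0 \<Longrightarrow> qrel q (toP ` (Urels q \<union> X))"
proof (unfold_locales)
  assume "q \<noteq> 0"
  show "cg (toP ` (Urels q \<union> X)) (pa * pb) (sm (inverse q) (pb * pa))"
    by (rule cg_of_rel[of "fa_sub (fa_mult ga gb) (fa_scal (inverse q) (fa_mult gb ga))"])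
       (auto simp: Urels_def toP_simps sm_def)
  show "cg (toP ` (Urels q \<union> X)) (pc * pd) (sm (inverse q) (pd * pc))"
    by (rule cg_of_rel[of "fa_sub (fa_mult gc gd) (fa_scal (inverse q) (fa_mult gd gc))"])
       (auto simp: Urels_def toP_simps sm_def)
  show "cg (toP ` (Urels q \<union> X)) (pa * pc) (sm q (pc * pa))"
    by (rule cg_of_rel[of "fa_sub (fa_mult ga gc) (fa_scal q (fa_mult gc ga))"])
       (auto simp: Urels_def toP_simps sm_def)
  show "cg (toP ` (Urels q \<union> X)) (pb * pd) (sm q (pd * pb))"
    by (rule cg_of_rel[of "fa_sub (fa_mult gb gd) (fa_scal q (fa_mult gd gb))"])
       (auto simp: Urels_def toP_simps sm_def)
  show "cg (toP ` (Urels q \<union> X)) (pa * pd) (pd * pa)"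
    by (rule cg_of_rel[of "fa_sub (fa_mult ga gd) (fa_mult gd ga)"])
       (auto simp: Urels_def toP_simps sm_def)
  show "cg (toP ` (Urels q \<union> X)) (pb * pc) (sm (q ^ 2) (pc * pb))"
    by (rule cg_of_rel[of "fa_sub (fa_mult gb gc) (fa_scal (q ^ 2) (fa_mult gc gb))"])
       (auto simp: Urels_def toP_simps sm_def)
  show "cg (toP ` (Urels q \<union> X)) (pD q * pe) 1"
    by (rule cg_of_rel[of "fa_sub (fa_mult (qD q) gDi) fa_one"])
       (auto simp: Urels_def toP_simps toP_qD)
  show "cg (toP ` (Urels q \<union> X)) (pe * pD q) 1"
    by (rule cg_of_rel[of "fa_sub (fa_mult gDi (qD q)) fa_one"])
       (auto simp: Urels_def toP_simps toP_qD)
qed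

lemma lookup_sm: "lookup (sm c p) w = c * lookup p w"
  by (simp add: sm_def lookup_sc_mult)

lemma lincomb_toP:
  assumes "finite T" "\<And>i. mon i \<in> FA"
  shows "fa_lincomb c T mon = lookup (\<Sum>i\<in>T. sm (c i) (toP (mon i)))"
  using assms by (simp add: fa_lincomb_def fun_eq_iff lookup_sum lookup_sm)


lemma qrel_U: "q \<noteq> 0 \<Longrightarrow> qrel q (toP ` Urels q)"
  using qrel_gen[of q "{}"] by simp

lemma span1:
  assumes q: "q \<noteq> 0" and f: "f \<in> FA"
  shows "\<exists>c T. finite T \<and> T \<subseteq> UNIV \<and> fa_sub f (fa_lincomb c T (mono1 q)) \<in> fa_ideal (Urels q)"
proof -
  interpret qrel q "toP ` Urels q" by (rule qrel_U[OF q])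
  obtain c T where T: "finite T" "cg (toP ` Urels q) (toP f) (\<Sum>i\<in>T. sm (c i) (M i))"
    using insp_all[of "toP f"] unfolding insp_def by blast
  have "toP f - (\<Sum>i\<in>T. sm (c i) (toP (mono1 q i))) \<in> pI (toP ` Urels q)"
    using T(2) by (simp add: cg_def toP_mono1)
  then have "lookup (toP f - (\<Sum>i\<in>T. sm (c i) (toP (mono1 q i)))) \<in> fa_ideal (Urels q)"
    by (rule pI_to_fa[OF _ Urels_FA])
  moreover have "lookup (toP f - (\<Sum>i\<in>T. sm (c i) (toP (mono1 q i)))) = fa_sub f (fa_lincomb c T (mono1 q))"
    using T(1) f by (simp add: lookup_minus fa_sub_def lincomb_toP fun_eq_iff)
  ultimately show ?thesis using T(1) by auto
qed

definition ev :: "'i \<Rightarrow> 'i vec" where "ev i = (\<lambda>x. if x = i then 1 else 0)"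

definition Dsh :: "idx1 vec \<Rightarrow> idx1 vec" where "Dsh y = (\<lambda>(k, l, m, n). y (k - 1, l, m, n))"
definition Zsh :: "idx1 vec \<Rightarrow> idx1 vec" where "Zsh y = (\<lambda>(k, l, m, n). if l > 0 then y (k, l - 1, m, n) else 0)"

lemma rho1_pD: "q \<noteq> 0 \<Longrightarrow> rho (ops1 q) (pD q) y = Dsh y"
proof (rule ext)
  fix x :: idx1 assume q: "q \<noteq> 0"
  obtain k l m n where x: "x = (k, l, m, n)" by (cases x) auto
  show "rho (ops1 q) (pD q) y x = Dsh y x"
    using Dshift[OF q, of y x] by (simp add: pD_def rho1_simps Q_m1 Dsh_def x)
qed

lemma rho1_pZ: "q \<noteq> 0 \<Longrightarrow> rho (ops1 q) pZ y = Zsh y"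
proof (rule ext)
  fix x :: idx1 assume q: "q \<noteq> 0"
  obtain k l m n where x: "x = (k, l, m, n)" by (cases x) auto
  show "rho (ops1 q) pZ y x = Zsh y x"
    using Zshift[OF q, of y x] by (simp add: pZ_def rho1_simps Zsh_def x)
qed

lemma ev_cong: "a = b \<Longrightarrow> ev a = ev b" by simp

lemma rho_pow: "(\<And>g. linop (ops g)) \<Longrightarrow> rho ops (p ^ j) y = ((rho ops p) ^^ j) y"
  by (induct j arbitrary: y) (simp_all add: rho_one rho_mult)

lemma Dsh_ev: "Dsh (ev (k, l, m, n)) = ev (k + 1, l, m, n)"
  by (auto simp: Dsh_def ev_def fun_eq_iff)
lemma opE_ev: "opE (ev (k, l, m, n)) = ev (k - 1, l, m, n)"
  by (auto simp: opE_def ev_def fun_eq_iff)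
lemma Zsh_ev: "Zsh (ev (k, l, m, n)) = ev (k, Suc l, m, n)"
  by (auto simp: Zsh_def ev_def fun_eq_iff)
lemma opA_ev: "m \<ge> 0 \<Longrightarrow> opA (ev (0, 0, m, n)) = ev (0, 0, m + 1, n)"
  by (auto simp: opA_def ev_def fun_eq_iff)
lemma opDd_ev: "m \<le> 0 \<Longrightarrow> opDd (ev (0, 0, m, n)) = ev (0, 0, m - 1, n)"
  by (auto simp: opDd_def ev_def fun_eq_iff)
lemma opC_ev: "n \<ge> 0 \<Longrightarrow> opC q (ev (0, 0, 0, n)) = ev (0, 0, 0, n + 1)"
  by (auto simp: opC_def ev_def fun_eq_iff Q_zero)
lemma opB_ev: "n \<le> 0 \<Longrightarrow> opB q (ev (0, 0, 0, n)) = ev (0, 0, 0, n - 1)"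
  by (auto simp: opB_def ev_def fun_eq_iff Q_zero)

lemma Dsh_iter: "(Dsh ^^ j) (ev (k, l, m, n)) = ev (k + int j, l, m, n)"
  apply (induct j) apply simp apply (simp add: Dsh_ev) apply (rule ev_cong) apply simp done
lemma opE_iter: "(opE ^^ j) (ev (k, l, m, n)) = ev (k - int j, l, m, n)"
  apply (induct j) apply simp apply (simp add: opE_ev) apply (rule ev_cong) apply simp done
lemma Zsh_iter: "(Zsh ^^ j) (ev (k, l, m, n)) = ev (k, l + j, m, n)"
  by (induct j) (simp_all add: Zsh_ev)
lemma opA_iter: "(opA ^^ j) (ev (0, 0, 0, n)) = ev (0, 0, int j, n)"
  by (induct j) (simp_all add: opA_ev add.commute)
lemma opDd_iter: "(opDd ^^ j) (ev (0, 0, 0, n)) = ev (0, 0, - int j, n)"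
  apply (induct j) apply simp apply (simp add: opDd_ev) apply (rule ev_cong) apply simp done
lemma opC_iter: "(opC q ^^ j) (ev (0, 0, 0, 0)) = ev (0, 0, 0, int j)"
  by (induct j) (simp_all add: opC_ev add.commute)
lemma opB_iter: "(opB q ^^ j) (ev (0, 0, 0, 0)) = ev (0, 0, 0, - int j)"
  apply (induct j) apply simp apply (simp add: opB_ev) apply (rule ev_cong) apply simp done

lemma fun_pow_ext: "(\<And>y. f y = g y) \<Longrightarrow> (f ^^ j) = (g ^^ j)"
proof -
  assume "\<And>y. f y = g y" then have "f = g" by (rule ext)
  then show ?thesis by simp
qed

context qrel begin

lemma rho1_M: "rho (ops1 q) (M (k, l, m, n)) (ev (0, 0, 0, 0)) = ev (k, l, m, n)"
proof -
  have lin: "\<And>g. linop (ops1 q g)" by (rule linop_ops1)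
  have rD: "rho (ops1 q) (pD q) = Dsh" using rho1_pD[OF qnz] by (rule ext)
  have rZ: "rho (ops1 q) pZ = Zsh" using rho1_pZ[OF qnz] by (rule ext)
  have ra: "rho (ops1 q) pa = opA" using rho1_a by (rule ext)
  have rb: "rho (ops1 q) pb = opB q" using rho1_b by (rule ext)
  have rc: "rho (ops1 q) pc = opC q" using rho1_c by (rule ext)
  have rd: "rho (ops1 q) pd = opDd" using rho1_d by (rule ext)
  have re: "rho (ops1 q) pe = opE" using rho1_e by (rule ext)
  have Y: "rho (ops1 q) (Yp n) (ev (0, 0, 0, 0)) = ev (0, 0, 0, n)"
    by (auto simp: Yp_def rho_pow[OF lin] rc rb opC_iter opB_iter rho_one)
  have X: "rho (ops1 q) (Xp m) (ev (0, 0, 0, n)) = ev (0, 0, m, n)"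
    by (auto simp: Xp_def rho_pow[OF lin] ra rd opA_iter opDd_iter rho_one)
  have Z: "rho (ops1 q) (pZ ^ l) (ev (0, 0, m, n)) = ev (0, l, m, n)"
    by (simp add: rho_pow[OF lin] rZ Zsh_iter)
  have D: "rho (ops1 q) (Dp k) (ev (0, l, m, n)) = ev (k, l, m, n)"
    by (auto simp: Dp_def rho_pow[OF lin] rD re Dsh_iter opE_iter)
  show ?thesis by (simp add: M_def rho_mult[OF lin] X Y Z D)
qed

end


lemma rho1_kills:
  assumes q: "q \<noteq> 0" and r: "r \<in> toP ` Urels q" shows "rho (ops1 q) r y = (\<lambda>x. 0)"
proof -
  from r obtain f where f: "f \<in> Urels q" "r = toP f" by auto
  have lin: "\<And>g. linop (ops1 q g)" by (rule linop_ops1)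
  have "Q q (-1) = inverse q" "Q q 1 = q" "Q q 2 = q ^ 2" "Q q 0 = 1" by (simp_all add: Q_def)
  note Qs = this
  show ?thesis
  proof (rule ext)
    fix x :: idx1
    obtain k l m n where x: "x = (k, l, m, n)" by (cases x) auto
    show "rho (ops1 q) r y x = 0"
      using f(1) unfolding Urels_def f(2)
      apply (elim insertE emptyE)
      by (simp_all add: toP_simps toP_qD rho_mult[OF lin] rho_diff[OF lin] rho_sc rho_one rho1_a rho1_b rho1_c
       rho1_d rho1_e rho1_pD[OF q] rAB[OF q] rCDd[OF q] rAC[OF q] rBDd[OF q] rADd[OF q] rBC[OF q] Qs
       Dsh_def opE_def x)
  qed
qed

context qrel begin
lemma rho1_M': "rho (ops1 q) (M i) (ev (0, 0, 0, 0)) = ev i"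
  by (cases i) (simp add: rho1_M)
end

lemma indep1:
  assumes q: "q \<noteq> 0" and T: "finite T" and I: "fa_lincomb c T (mono1 q) \<in> fa_ideal (Urels q)" and j: "j \<in> T"
  shows "c j = 0"
proof -
  interpret qrel q "toP ` Urels q" by (rule qrel_U[OF q])
  let ?f = "fa_lincomb c T (mono1 q)"
  have lin: "\<And>g. linop (ops1 q g)" by (rule linop_ops1)
  have "toP ?f \<in> pI (toP ` Urels q)" using fa_to_pI[OF I Urels_FA] by simp
  then have z: "rho (ops1 q) (toP ?f) (ev (0, 0, 0, 0)) = (\<lambda>x. 0)"
    by (intro rho_kills[OF lin rho1_kills[OF q]])
  have "toP ?f = (\<Sum>i\<in>T. sm (c i) (M i))"
    using lincomb_toP[of T "mono1 q" c, OF T FA_mono1] by (simp add: toP_mono1)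
  then have "rho (ops1 q) (toP ?f) (ev (0, 0, 0, 0)) = (\<lambda>x. \<Sum>i\<in>T. c i * ev i x)"
    by (simp add: rho_sum[OF T] rho_sm[OF lin] rho1_M')
  then have "(\<Sum>i\<in>T. c i * ev i j) = 0" using z by (metis (mono_tags))
  moreover have "(\<Sum>i\<in>T. c i * ev i j) = c j"
    using T j by (simp add: ev_def if_distrib cong: if_cong)
  ultimately show ?thesis by simp
qed

lemma part1:
  assumes "cmod q = 1" shows "basis_mod (fa_ideal (Urels q)) UNIV (mono1 q)"
proof -
  have q: "q \<noteq> 0" using assms by auto
  show ?thesis unfolding basis_mod_def
    using span1[OF q] indep1[OF q] by blast
qed


lemma sm_sum': "sm a (\<Sum>i\<in>T. f i) = (\<Sum>i\<in>T. sm a (f i))"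
  by (simp add: sm_def sum_distrib_left)
lemma sm_plus_scal': "sm (a + b) x = sm a x + sm b x"
  unfolding sm_def sc_add[symmetric] by (rule distrib_right)
lemma sm_zero_scal' [simp]: "sm 0 x = 0"
  by (simp add: sm_def)
lemma sm_minus_one: "sm (-1) y = - y"
  by (rule poly_mapping_eqI) (simp add: sm_def lookup_sc_mult)

definition gsp :: "P set \<Rightarrow> 'i set \<Rightarrow> ('i \<Rightarrow> P) \<Rightarrow> P \<Rightarrow> bool" where
  "gsp R S F x \<longleftrightarrow> (\<exists>c T. finite T \<and> T \<subseteq> S \<and> cg R x (\<Sum>i\<in>T. sm (c i) (F i)))"

lemma gsp_F: "i \<in> S \<Longrightarrow> gsp R S F (F i)"
  unfolding gsp_def by (rule exI[of _ "\<lambda>_. 1"], rule exI[of _ "{i}"]) simp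

lemma gsp_cg: "cg R x y \<Longrightarrow> gsp R S F y \<Longrightarrow> gsp R S F x"
proof -
  assume xy: "cg R x y" and "gsp R S F y"
  then obtain c T where "finite T" "T \<subseteq> S" "cg R y (\<Sum>i\<in>T. sm (c i) (F i))" unfolding gsp_def by blast
  then show ?thesis unfolding gsp_def using cg_trans[OF xy] by blast
qed

lemma gsp_sm: "gsp R S F x \<Longrightarrow> gsp R S F (sm a x)"
proof -
  assume "gsp R S F x"
  then obtain c T where T: "finite T" "T \<subseteq> S" "cg R x (\<Sum>i\<in>T. sm (c i) (F i))" unfolding gsp_def by blast
  then have "cg R (sm a x) (\<Sum>i\<in>T. sm (a * c i) (F i))"
    using cg_lmult[OF T(3), of "sc a"] by (simp add: sm_def[symmetric] sm_sum')
  then show ?thesis using T(1,2) unfolding gsp_def by (intro exI[of _ "\<lambda>i. a * c i"] exI[of _ T]) simp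
qed


lemma gsp_add: "gsp R S F x \<Longrightarrow> gsp R S F y \<Longrightarrow> gsp R S F (x + y)"
proof -
  assume "gsp R S F x" "gsp R S F y"
  then obtain c1 T1 c2 T2 where T: "finite T1" "T1 \<subseteq> S" "cg R x (\<Sum>i\<in>T1. sm (c1 i) (F i))"
    "finite T2" "T2 \<subseteq> S" "cg R y (\<Sum>i\<in>T2. sm (c2 i) (F i))" unfolding gsp_def by blast
  define c where "c i = (if i \<in> T1 then c1 i else 0) + (if i \<in> T2 then c2 i else 0)" for i
  have pt: "sm (c i) (F i) = (if i \<in> T1 then sm (c1 i) (F i) else 0) + (if i \<in> T2 then sm (c2 i) (F i) else 0)" for i
    by (auto simp: c_def sm_plus_scal')
  have "(\<Sum>i\<in>T1 \<union> T2. sm (c i) (F i)) =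
        (\<Sum>i\<in>T1 \<union> T2. (if i \<in> T1 then sm (c1 i) (F i) else 0)) + (\<Sum>i\<in>T1 \<union> T2. (if i \<in> T2 then sm (c2 i) (F i) else 0))"
    unfolding pt by (rule sum.distrib)
  also have "\<dots> = (\<Sum>i\<in>T1. sm (c1 i) (F i)) + (\<Sum>i\<in>T2. sm (c2 i) (F i))"
    using T(1,4) by (simp add: sum.inter_restrict[symmetric] Int_absorb1 Int_absorb2)
  finally have "cg R (x + y) (\<Sum>i\<in>T1 \<union> T2. sm (c i) (F i))" using cg_add[OF T(3) T(6)] by simp
  then show ?thesis using T(1,2,4,5) unfolding gsp_def by (intro exI[of _ c] exI[of _ "T1 \<union> T2"]) simp
qed

lemma gsp_zero: "gsp R S F 0"
  unfolding gsp_def by (rule exI[of _ "\<lambda>_. 0"], rule exI[of _ "{}"]) simp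

lemma gsp_sum: "finite T \<Longrightarrow> (\<And>i. i \<in> T \<Longrightarrow> gsp R S F (f i)) \<Longrightarrow> gsp R S F (\<Sum>i\<in>T. f i)"
  by (induct rule: finite_induct) (auto intro: gsp_add gsp_zero)

lemma gsp_lincomb: "finite T \<Longrightarrow> (\<And>i. i \<in> T \<Longrightarrow> gsp R S F (G i)) \<Longrightarrow> gsp R S F (\<Sum>i\<in>T. sm (c i) (G i))"
  by (intro gsp_sum gsp_sm) auto

definition DT :: "complex \<Rightarrow> P set" where "DT q = toP ` (Urels q \<union> DTrels)"

lemma cg_of_DT: "f \<in> DTrels \<Longrightarrow> toP f = x \<Longrightarrow> cg (DT q) x 0"
  unfolding cg_def DT_def by (metis UnI2 image_eqI pI.base diff_zero)

lemma qrel_DT: "q \<noteq> 0 \<Longrightarrow> qrel q (DT q)"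
  unfolding DT_def by (rule qrel_gen)

lemma s_ab: "cg (DT q) (pa * pb) 0" by (rule cg_of_DT[of "fa_mult ga gb"]) (auto simp: DTrels_def toP_simps)
lemma s_ac: "cg (DT q) (pa * pc) 0" by (rule cg_of_DT[of "fa_mult ga gc"]) (auto simp: DTrels_def toP_simps)
lemma s_cd: "cg (DT q) (pc * pd) 0" by (rule cg_of_DT[of "fa_mult gc gd"]) (auto simp: DTrels_def toP_simps)
lemma s_bd: "cg (DT q) (pb * pd) 0" by (rule cg_of_DT[of "fa_mult gb gd"]) (auto simp: DTrels_def toP_simps)


locale qdt =
  fixes q :: complex
  assumes qnz2: "q \<noteq> 0"

sublocale qdt \<subseteq> qrel q "DT q" by (rule qrel_DT[OF qnz2])

context qdt begin

abbreviation ceq2 (infix "\<approx>" 50) where "x \<approx> y \<equiv> cg (DT q) x y"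

definition N :: "idx2 \<Rightarrow> P" where
  "N i = (case i of IA m n \<Rightarrow> Dp m * pa ^ n | ID m n \<Rightarrow> Dp m * pd ^ n | IZ m \<Rightarrow> Dp m * pZ
     | IB m n \<Rightarrow> Dp m * pb ^ n | IC m n \<Rightarrow> Dp m * pc ^ n | IZc m \<Rightarrow> Dp m * (1 - pZ))"

lemma FA_mono2 [simp]: "mono2 q i \<in> FA"
  by (cases i) (simp_all add: mono2_def)

lemma toP_mono2: "toP (mono2 q i) = N i"
  by (cases i) (simp_all add: mono2_def N_def toP_simps toP_Dpow toP_qz)

lemma zero_prod: "x * y \<approx> 0 \<Longrightarrow> x ^ Suc i * y ^ Suc j \<approx> 0"
proof -
  assume h: "x * y \<approx> 0"
  have e1: "x ^ Suc i = x ^ i * x" by (rule power_Suc2)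
  have e2: "y ^ Suc j = y * y ^ j" by (rule power_Suc)
  have "x ^ Suc i * y ^ Suc j = x ^ i * (x * y) * y ^ j" by (simp only: e1 e2 mult.assoc)
  also have "\<dots> \<approx> x ^ i * 0 * y ^ j" by (rule cg_ctx[OF h])
  finally show ?thesis by simp
qed

lemma ab0: "pa * pb \<approx> 0" by (rule s_ab)
lemma ac0: "pa * pc \<approx> 0" by (rule s_ac)
lemma cd0: "pc * pd \<approx> 0" by (rule s_cd)
lemma bd0: "pb * pd \<approx> 0" by (rule s_bd)
lemma dc0: "pd * pc \<approx> 0"
proof -
  have "pd * pc \<approx> sm q (pc * pd)" using qc_dc by (simp add: qc_def)
  also have "\<dots> \<approx> sm q 0" by (intro cg_sm cd0)
  finally show ?thesis by (simp add: sm_def)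
qed
lemma db0: "pd * pb \<approx> 0"
proof -
  have "pd * pb \<approx> sm (inverse q) (pb * pd)" using qc_db by (simp add: qc_def)
  also have "\<dots> \<approx> sm (inverse q) 0" by (intro cg_sm bd0)
  finally show ?thesis by (simp add: sm_def)
qed

lemma XY0: "m \<noteq> 0 \<Longrightarrow> n \<noteq> 0 \<Longrightarrow> Xp m * Yp n \<approx> 0"
proof -
  assume m: "m \<noteq> 0" and n: "n \<noteq> 0"
  obtain i where i: "nat \<bar>m\<bar> = Suc i" using m by (cases "nat \<bar>m\<bar>") auto
  obtain j where j: "nat \<bar>n\<bar> = Suc j" using n by (cases "nat \<bar>n\<bar>") auto
  consider "m > 0" "n > 0" | "m > 0" "n < 0" | "m < 0" "n > 0" | "m < 0" "n < 0" using m n by linarith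
  then show ?thesis
  proof cases
    case 1 then show ?thesis using zero_prod[OF ac0, of i j] i j by (simp add: Xp_def Yp_def)
  next
    case 2 then show ?thesis using zero_prod[OF ab0, of i j] i j by (simp add: Xp_def Yp_def)
  next
    case 3 then show ?thesis using zero_prod[OF dc0, of i j] i j by (simp add: Xp_def Yp_def)
  next
    case 4 then show ?thesis using zero_prod[OF db0, of i j] i j by (simp add: Xp_def Yp_def)
  qed
qed

lemma aaD: "pa * (pa * pd) \<approx> pa * pD q"
proof -
  have "pa * pD q = pa * (pa * pd) - sm (inverse q) ((pa * pb) * pc)" by (simp add: pD_def right_diff_distrib mult.assoc)
  also have "\<dots> \<approx> pa * (pa * pd) - sm (inverse q) (0 * pc)" by (intro cg_diff cg_refl cg_sm cg_rmult ab0)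
  finally show ?thesis by (simp add: cg_sym sm_def)
qed

lemma aZ: "pa * pZ \<approx> pa"
proof -
  have "pa * pZ = (pa * pe) * (pa * pd)" by (simp add: pZ_def mult.assoc)
  also have "\<dots> \<approx> sm 1 (pe * pa) * (pa * pd)" using qc_ae by (intro cg_rmult) (simp add: qc_def)
  also have "\<dots> = pe * (pa * (pa * pd))" by (simp add: mult.assoc)
  also have "\<dots> \<approx> pe * (pa * pD q)" by (intro cg_lmult aaD)
  also have "\<dots> \<approx> pe * (sm 1 (pD q * pa))" using qc_aD by (intro cg_lmult) (simp add: qc_def)
  also have "\<dots> = (pe * pD q) * pa" by (simp add: mult.assoc)
  also have "\<dots> \<approx> 1 * pa" by (intro cg_rmult r8)
  finally show ?thesis by simp
qed

lemma Ddd: "pD q * pd \<approx> pa * pd * pd"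
proof -
  have "pD q * pd = pa * pd * pd - sm (inverse q) (pb * (pc * pd))" by (simp add: pD_def left_diff_distrib mult.assoc)
  also have "\<dots> \<approx> pa * pd * pd - sm (inverse q) (pb * 0)" by (intro cg_diff cg_refl cg_sm cg_lmult cd0)
  finally show ?thesis by (simp add: sm_def)
qed

lemma dZ: "pd * pZ \<approx> pd"
proof -
  have "pd * pZ \<approx> sm 1 (pZ * pd)" using qc_dZ by (simp add: qc_def)
  also have "\<dots> = pe * (pa * pd * pd)" by (simp add: pZ_def mult.assoc)
  also have "\<dots> \<approx> pe * (pD q * pd)" by (intro cg_lmult cg_sym[OF Ddd])
  also have "\<dots> = (pe * pD q) * pd" by (simp add: mult.assoc)
  also have "\<dots> \<approx> 1 * pd" by (intro cg_rmult r8)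
  finally show ?thesis by simp
qed

lemma Zc0: "pZ * pc \<approx> 0"
proof -
  have "pZ * pc = pe * pa * (pd * pc)" by (simp add: pZ_def mult.assoc)
  also have "\<dots> \<approx> pe * pa * 0" by (intro cg_lmult dc0)
  finally show ?thesis by simp
qed

lemma Zb0: "pZ * pb \<approx> 0"
proof -
  have "pZ * pb = pe * pa * (pd * pb)" by (simp add: pZ_def mult.assoc)
  also have "\<dots> \<approx> pe * pa * 0" by (intro cg_lmult db0)
  finally show ?thesis by simp
qed

lemma ZZ: "pZ * pZ \<approx> pZ"
proof -
  have "pZ * pZ = pe * pa * (pd * pZ)" by (simp add: pZ_def mult.assoc)
  also have "\<dots> \<approx> pe * pa * pd" by (intro cg_lmult dZ)
  finally show ?thesis by (simp add: pZ_def)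
qed

lemma Zpow: "pZ ^ Suc l \<approx> pZ"
proof (induct l)
  case 0 then show ?case by simp
next
  case (Suc l)
  have "pZ ^ Suc (Suc l) = pZ * pZ ^ Suc l" by simp
  also have "\<dots> \<approx> pZ * pZ" by (intro cg_lmult Suc)
  also have "\<dots> \<approx> pZ" by (rule ZZ)
  finally show ?case .
qed

lemma ZX1: "m \<noteq> 0 \<Longrightarrow> pZ * Xp m \<approx> Xp m"
proof -
  assume m: "m \<noteq> 0"
  obtain i where i: "nat \<bar>m\<bar> = Suc i" using m by (cases "nat \<bar>m\<bar>") auto
  have Za: "qc pZ pa 1" using qc_flip[OF qc_aZ] by simp
  have Zd: "qc pZ pd 1" using qc_flip[OF qc_dZ] by simp
  show ?thesis
  proof (cases "m > 0")
    case True
    have "pZ * Xp m = pZ * pa ^ Suc i" using True i by (simp add: Xp_def del: power_Suc)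
    also have "\<dots> \<approx> sm 1 (pa ^ Suc i * pZ)" using qc_pow_right[OF Za, of "Suc i"] by (simp add: qc_def del: power_Suc)
    also have "\<dots> = pa ^ i * (pa * pZ)" by (simp add: power_Suc2 mult.assoc del: power_Suc)
    also have "\<dots> \<approx> pa ^ i * pa" by (intro cg_lmult aZ)
    also have "\<dots> = Xp m" using True i by (simp add: Xp_def power_Suc2 del: power_Suc)
    finally show ?thesis .
  next
    case False
    then have mm: "m < 0" using m by simp
    have "pZ * Xp m = pZ * pd ^ Suc i" using mm i by (simp add: Xp_def del: power_Suc)
    also have "\<dots> \<approx> sm 1 (pd ^ Suc i * pZ)" using qc_pow_right[OF Zd, of "Suc i"] by (simp add: qc_def del: power_Suc)
    also have "\<dots> = pd ^ i * (pd * pZ)" by (simp add: power_Suc2 mult.assoc del: power_Suc)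
    also have "\<dots> \<approx> pd ^ i * pd" by (intro cg_lmult dZ)
    also have "\<dots> = Xp m" using mm i by (simp add: Xp_def power_Suc2 del: power_Suc)
    finally show ?thesis .
  qed
qed

lemma ZX: "m \<noteq> 0 \<Longrightarrow> pZ ^ l * Xp m \<approx> Xp m"
proof (induct l)
  case 0 then show ?case by simp
next
  case (Suc l)
  have "pZ ^ Suc l * Xp m = pZ ^ l * (pZ * Xp m)" by (simp add: power_Suc2 mult.assoc del: power_Suc)
  also have "\<dots> \<approx> pZ ^ l * Xp m" by (intro cg_lmult ZX1 Suc)
  also have "\<dots> \<approx> Xp m" by (rule Suc(1)[OF Suc(2)])
  finally show ?case .
qed

lemma ZY0: "n \<noteq> 0 \<Longrightarrow> pZ ^ Suc l * Yp n \<approx> 0"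
proof -
  assume n: "n \<noteq> 0"
  obtain j where j: "nat \<bar>n\<bar> = Suc j" using n by (cases "nat \<bar>n\<bar>") auto
  show ?thesis
  proof (cases "n > 0")
    case True
    have e1: "pZ ^ Suc l = pZ ^ l * pZ" by (rule power_Suc2)
    have e2: "pc ^ Suc j = pc * pc ^ j" by (rule power_Suc)
    have "Yp n = pc ^ Suc j" using True j by (simp add: Yp_def del: power_Suc)
    then have "pZ ^ Suc l * Yp n = pZ ^ l * (pZ * pc) * pc ^ j" by (simp only: e1 e2 mult.assoc)
    also have "\<dots> \<approx> pZ ^ l * 0 * pc ^ j" by (rule cg_ctx[OF Zc0])
    finally show ?thesis by simp
  next
    case False
    then have nn: "n < 0" using n by simp
    have e1: "pZ ^ Suc l = pZ ^ l * pZ" by (rule power_Suc2)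
    have e2: "pb ^ Suc j = pb * pb ^ j" by (rule power_Suc)
    have "Yp n = pb ^ Suc j" using nn j by (simp add: Yp_def del: power_Suc)
    then have "pZ ^ Suc l * Yp n = pZ ^ l * (pZ * pb) * pb ^ j" by (simp only: e1 e2 mult.assoc)
    also have "\<dots> \<approx> pZ ^ l * 0 * pb ^ j" by (rule cg_ctx[OF Zb0])
    finally show ?thesis by simp
  qed
qed


lemma S2_mem: "n > 0 \<Longrightarrow> IA m n \<in> S2" "n > 0 \<Longrightarrow> ID m n \<in> S2" "IZ m \<in> S2"
  "n > 0 \<Longrightarrow> IB m n \<in> S2" "n > 0 \<Longrightarrow> IC m n \<in> S2" "IZc m \<in> S2"
  by (auto simp: S2_def)

lemma M_gsp: "gsp (DT q) S2 N (M i)"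
proof -
  obtain k l m n where i: "i = (k, l, m, n)" by (cases i) auto
  have Mi: "M i = Dp k * (pZ ^ l * (Xp m * Yp n))" by (simp add: i M_def)
  show ?thesis
  proof (cases "m \<noteq> 0 \<and> n \<noteq> 0")
    case True
    have "M i \<approx> Dp k * (pZ ^ l * 0)" unfolding Mi by (intro cg_lmult XY0) (use True in auto)
    then show ?thesis by (simp add: gsp_cg gsp_zero)
  next
    case False
    show ?thesis
    proof (cases "m \<noteq> 0")
      case m: True
      then have n: "n = 0" using False by simp
      have "M i = Dp k * (pZ ^ l * Xp m)" by (simp add: Mi n Yp_def)
      also have "\<dots> \<approx> Dp k * Xp m" by (intro cg_lmult ZX m)
      finally have h: "M i \<approx> Dp k * Xp m" .
      show ?thesis
      proof (cases "m > 0")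
        case True
        have "Dp k * Xp m = N (IA k (nat m))" using True by (simp add: N_def Xp_def)
        then show ?thesis using h gsp_cg gsp_F[OF S2_mem(1)] True by (metis zero_less_nat_eq)
      next
        case False
        have "Dp k * Xp m = N (ID k (nat (- m)))" using False m by (simp add: N_def Xp_def)
        then show ?thesis using h gsp_cg gsp_F[OF S2_mem(2)] False m
          by (metis neg_0_less_iff_less linorder_neqE_linordered_idom zero_less_nat_eq)
      qed
    next
      case m0: False
      then have m: "m = 0" by simp
      show ?thesis
      proof (cases "n \<noteq> 0")
        case n: True
        show ?thesis
        proof (cases l)
          case 0
          show ?thesis
          proof (cases "n > 0")
            case True
            have "M i = N (IC k (nat n))" using True by (simp add: Mi m 0 N_def Xp_def Yp_def)
            then show ?thesis using gsp_F[OF S2_mem(5)] True by (metis zero_less_nat_eq)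
          next
            case False
            have "M i = N (IB k (nat (- n)))" using False n by (simp add: Mi m 0 N_def Xp_def Yp_def)
            then show ?thesis using gsp_F[OF S2_mem(4)] False n
              by (metis neg_0_less_iff_less linorder_neqE_linordered_idom zero_less_nat_eq)
          qed
        next
          case (Suc l')
          have "M i = Dp k * (pZ ^ Suc l' * Yp n)" by (simp add: Mi m Suc Xp_def del: power_Suc)
          also have "\<dots> \<approx> Dp k * 0" by (intro cg_lmult ZY0 n)
          finally show ?thesis by (simp add: gsp_cg gsp_zero)
        qed
      next
        case False
        then have n: "n = 0" by simp
        show ?thesis
        proof (cases l)
          case 0
          have "M i = N (IZ k) + N (IZc k)" by (simp add: Mi m n 0 N_def Xp_def Yp_def algebra_simps)
          then show ?thesis by (simp add: gsp_add gsp_F S2_mem)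
        next
          case (Suc l')
          have "M i = Dp k * pZ ^ Suc l'" by (simp add: Mi m n Suc Xp_def Yp_def del: power_Suc)
          also have "\<dots> \<approx> Dp k * pZ" by (intro cg_lmult Zpow)
          also have "Dp k * pZ = N (IZ k)" by (simp add: N_def)
          finally show ?thesis by (rule gsp_cg) (rule gsp_F[OF S2_mem(3)])
        qed
      qed
    qed
  qed
qed

end

lemma DTrels_FA: "Urels q \<union> DTrels \<subseteq> FA" by (auto simp: Urels_def DTrels_def)

lemma span2:
  assumes q: "q \<noteq> 0" and f: "f \<in> FA"
  shows "\<exists>c T. finite T \<and> T \<subseteq> S2 \<and> fa_sub f (fa_lincomb c T (mono2 q)) \<in> fa_ideal (Urels q \<union> DTrels)"
proof -
  interpret qdt q by (unfold_locales) (rule q)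
  obtain c T where T: "finite T" "cg (DT q) (toP f) (\<Sum>i\<in>T. sm (c i) (M i))"
    using insp_all[of "toP f"] unfolding insp_def by blast
  have "gsp (DT q) S2 N (\<Sum>i\<in>T. sm (c i) (M i))" by (intro gsp_lincomb T(1) M_gsp)
  then have "gsp (DT q) S2 N (toP f)" by (rule gsp_cg[OF T(2)])
  then obtain d U where U: "finite U" "U \<subseteq> S2" "cg (DT q) (toP f) (\<Sum>i\<in>U. sm (d i) (N i))"
    unfolding gsp_def by blast
  have "toP f - (\<Sum>i\<in>U. sm (d i) (toP (mono2 q i))) \<in> pI (DT q)"
    using U(3) by (simp add: cg_def toP_mono2)
  then have "lookup (toP f - (\<Sum>i\<in>U. sm (d i) (toP (mono2 q i)))) \<in> fa_ideal (Urels q \<union> DTrels)"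
    unfolding DT_def by (rule pI_to_fa[OF _ DTrels_FA])
  moreover have "lookup (toP f - (\<Sum>i\<in>U. sm (d i) (toP (mono2 q i)))) = fa_sub f (fa_lincomb d U (mono2 q))"
    using U(1) f by (simp add: lookup_minus fa_sub_def lincomb_toP fun_eq_iff)
  ultimately show ?thesis using U(1,2) by auto
qed


type_synonym idx3 = "bool \<times> int \<times> int"

definition opA2 :: "idx3 vec \<Rightarrow> idx3 vec" where
  "opA2 y = (\<lambda>(b, i, j). if b then y (True, i - 1, j) else 0)"
definition opD2 :: "idx3 vec \<Rightarrow> idx3 vec" where
  "opD2 y = (\<lambda>(b, i, j). if b then y (True, i, j - 1) else 0)"
definition opB2 :: "complex \<Rightarrow> idx3 vec \<Rightarrow> idx3 vec" where
  "opB2 q y = (\<lambda>(b, i, j). if b then 0 else Q q (2 * i) * y (False, i, j - 1))"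
definition opC2 :: "idx3 vec \<Rightarrow> idx3 vec" where
  "opC2 y = (\<lambda>(b, i, j). if b then 0 else y (False, i - 1, j))"
definition opE2 :: "complex \<Rightarrow> idx3 vec \<Rightarrow> idx3 vec" where
  "opE2 q y = (\<lambda>(b, i, j). if b then y (True, i + 1, j + 1) else - (Q q (- 1 - 2 * i) * y (False, i + 1, j + 1)))"
definition Dsh2 :: "complex \<Rightarrow> idx3 vec \<Rightarrow> idx3 vec" where
  "Dsh2 q y = (\<lambda>(b, i, j). if b then y (True, i - 1, j - 1) else - (Q q (2 * i - 1) * y (False, i - 1, j - 1)))"

lemma sAB: assumes q: "q \<noteq> 0"
  shows "opA2 (opB2 q y) x = Q q (-1) * opB2 q (opA2 y) x"
proof -
  obtain b i j where x: "x = (b, i, j)" by (cases x) auto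
  have nz: "Q q i \<noteq> 0" using q by (simp_all add: Q_nz)
  show ?thesis unfolding x
    by (auto simp: opA2_def opB2_def opC2_def opD2_def opE2_def Dsh2_def Qexpq[OF q] Qexp nz q field_simps power2_eq_square power3_eq_cube power4_eq_xxxx)
qed

lemma sCD: assumes q: "q \<noteq> 0"
  shows "opC2 (opD2 y) x = Q q (-1) * opD2 (opC2 y) x"
proof -
  obtain b i j where x: "x = (b, i, j)" by (cases x) auto
  have nz: "Q q i \<noteq> 0" using q by (simp_all add: Q_nz)
  show ?thesis unfolding x
    by (auto simp: opA2_def opB2_def opC2_def opD2_def opE2_def Dsh2_def Qexpq[OF q] Qexp nz q field_simps power2_eq_square power3_eq_cube power4_eq_xxxx)
qed

lemma sAC: assumes q: "q \<noteq> 0"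
  shows "opA2 (opC2 y) x = Q q 1 * opC2 (opA2 y) x"
proof -
  obtain b i j where x: "x = (b, i, j)" by (cases x) auto
  have nz: "Q q i \<noteq> 0" using q by (simp_all add: Q_nz)
  show ?thesis unfolding x
    by (auto simp: opA2_def opB2_def opC2_def opD2_def opE2_def Dsh2_def Qexpq[OF q] Qexp nz q field_simps power2_eq_square power3_eq_cube power4_eq_xxxx)
qed

lemma sBD: assumes q: "q \<noteq> 0"
  shows "opB2 q (opD2 y) x = Q q 1 * opD2 (opB2 q y) x"
proof -
  obtain b i j where x: "x = (b, i, j)" by (cases x) auto
  have nz: "Q q i \<noteq> 0" using q by (simp_all add: Q_nz)
  show ?thesis unfolding x
    by (auto simp: opA2_def opB2_def opC2_def opD2_def opE2_def Dsh2_def Qexpq[OF q] Qexp nz q field_simps power2_eq_square power3_eq_cube power4_eq_xxxx)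
qed

lemma sAD: assumes q: "q \<noteq> 0"
  shows "opA2 (opD2 y) x = opD2 (opA2 y) x + 0 * Q q 0"
proof -
  obtain b i j where x: "x = (b, i, j)" by (cases x) auto
  have nz: "Q q i \<noteq> 0" using q by (simp_all add: Q_nz)
  show ?thesis unfolding x
    by (auto simp: opA2_def opB2_def opC2_def opD2_def opE2_def Dsh2_def Qexpq[OF q] Qexp nz q field_simps power2_eq_square power3_eq_cube power4_eq_xxxx)
qed

lemma sBC: assumes q: "q \<noteq> 0"
  shows "opB2 q (opC2 y) x = Q q 2 * opC2 (opB2 q y) x"
proof -
  obtain b i j where x: "x = (b, i, j)" by (cases x) auto
  have nz: "Q q i \<noteq> 0" using q by (simp_all add: Q_nz)
  show ?thesis unfolding x
    by (auto simp: opA2_def opB2_def opC2_def opD2_def opE2_def Dsh2_def Qexpq[OF q] Qexp nz q field_simps power2_eq_square power3_eq_cube power4_eq_xxxx)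
qed

lemma sDshift: assumes q: "q \<noteq> 0"
  shows "opA2 (opD2 y) x - Q q (-1) * opB2 q (opC2 y) x = Dsh2 q y x"
proof -
  obtain b i j where x: "x = (b, i, j)" by (cases x) auto
  have nz: "Q q i \<noteq> 0" using q by (simp_all add: Q_nz)
  show ?thesis unfolding x
    by (auto simp: opA2_def opB2_def opC2_def opD2_def opE2_def Dsh2_def Qexpq[OF q] Qexp nz q field_simps power2_eq_square power3_eq_cube power4_eq_xxxx)
qed

lemma sDE: assumes q: "q \<noteq> 0"
  shows "Dsh2 q (opE2 q y) x = y x"
proof -
  obtain b i j where x: "x = (b, i, j)" by (cases x) auto
  have nz: "Q q i \<noteq> 0" using q by (simp_all add: Q_nz)
  show ?thesis unfolding x
    by (auto simp: opA2_def opB2_def opC2_def opD2_def opE2_def Dsh2_def Qexpq[OF q] Qexp nz q field_simps power2_eq_square power3_eq_cube power4_eq_xxxx)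
qed

lemma sED: assumes q: "q \<noteq> 0"
  shows "opE2 q (Dsh2 q y) x = y x"
proof -
  obtain b i j where x: "x = (b, i, j)" by (cases x) auto
  have nz: "Q q i \<noteq> 0" using q by (simp_all add: Q_nz)
  show ?thesis unfolding x
    by (auto simp: opA2_def opB2_def opC2_def opD2_def opE2_def Dsh2_def Qexpq[OF q] Qexp nz q field_simps power2_eq_square power3_eq_cube power4_eq_xxxx)
qed

lemma tAB: assumes q: "q \<noteq> 0"
  shows "opA2 (opB2 q y) x = 0 * Q q 0"
proof -
  obtain b i j where x: "x = (b, i, j)" by (cases x) auto
  have nz: "Q q i \<noteq> 0" using q by (simp_all add: Q_nz)
  show ?thesis unfolding x
    by (auto simp: opA2_def opB2_def opC2_def opD2_def opE2_def Dsh2_def Qexpq[OF q] Qexp nz q field_simps power2_eq_square power3_eq_cube power4_eq_xxxx)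
qed

lemma tAC: assumes q: "q \<noteq> 0"
  shows "opA2 (opC2 y) x = 0 * Q q 0"
proof -
  obtain b i j where x: "x = (b, i, j)" by (cases x) auto
  have nz: "Q q i \<noteq> 0" using q by (simp_all add: Q_nz)
  show ?thesis unfolding x
    by (auto simp: opA2_def opB2_def opC2_def opD2_def opE2_def Dsh2_def Qexpq[OF q] Qexp nz q field_simps power2_eq_square power3_eq_cube power4_eq_xxxx)
qed

lemma tCD: assumes q: "q \<noteq> 0"
  shows "opC2 (opD2 y) x = 0 * Q q 0"
proof -
  obtain b i j where x: "x = (b, i, j)" by (cases x) auto
  have nz: "Q q i \<noteq> 0" using q by (simp_all add: Q_nz)
  show ?thesis unfolding x
    by (auto simp: opA2_def opB2_def opC2_def opD2_def opE2_def Dsh2_def Qexpq[OF q] Qexp nz q field_simps power2_eq_square power3_eq_cube power4_eq_xxxx)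
qed

lemma tBD: assumes q: "q \<noteq> 0"
  shows "opB2 q (opD2 y) x = 0 * Q q 0"
proof -
  obtain b i j where x: "x = (b, i, j)" by (cases x) auto
  have nz: "Q q i \<noteq> 0" using q by (simp_all add: Q_nz)
  show ?thesis unfolding x
    by (auto simp: opA2_def opB2_def opC2_def opD2_def opE2_def Dsh2_def Qexpq[OF q] Qexp nz q field_simps power2_eq_square power3_eq_cube power4_eq_xxxx)
qed


lemma tBA: assumes q: "q \<noteq> 0"
  shows "opB2 q (opA2 y) x = 0 * Q q 0"
proof -
  obtain b i j where x: "x = (b, i, j)" by (cases x) auto
  have nz: "Q q i \<noteq> 0" using q by (simp_all add: Q_nz)
  show ?thesis unfolding x
    by (auto simp: opA2_def opB2_def opC2_def opD2_def opE2_def Dsh2_def Qexpq[OF q] Qexp nz q field_simps power2_eq_square power3_eq_cube power4_eq_xxxx)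
qed

lemma tCA: assumes q: "q \<noteq> 0"
  shows "opC2 (opA2 y) x = 0 * Q q 0"
proof -
  obtain b i j where x: "x = (b, i, j)" by (cases x) auto
  have nz: "Q q i \<noteq> 0" using q by (simp_all add: Q_nz)
  show ?thesis unfolding x
    by (auto simp: opA2_def opB2_def opC2_def opD2_def opE2_def Dsh2_def Qexpq[OF q] Qexp nz q field_simps power2_eq_square power3_eq_cube power4_eq_xxxx)
qed

lemma tDC: assumes q: "q \<noteq> 0"
  shows "opD2 (opC2 y) x = 0 * Q q 0"
proof -
  obtain b i j where x: "x = (b, i, j)" by (cases x) auto
  have nz: "Q q i \<noteq> 0" using q by (simp_all add: Q_nz)
  show ?thesis unfolding x
    by (auto simp: opA2_def opB2_def opC2_def opD2_def opE2_def Dsh2_def Qexpq[OF q] Qexp nz q field_simps power2_eq_square power3_eq_cube power4_eq_xxxx)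
qed

lemma tDB: assumes q: "q \<noteq> 0"
  shows "opD2 (opB2 q y) x = 0 * Q q 0"
proof -
  obtain b i j where x: "x = (b, i, j)" by (cases x) auto
  have nz: "Q q i \<noteq> 0" using q by (simp_all add: Q_nz)
  show ?thesis unfolding x
    by (auto simp: opA2_def opB2_def opC2_def opD2_def opE2_def Dsh2_def Qexpq[OF q] Qexp nz q field_simps power2_eq_square power3_eq_cube power4_eq_xxxx)
qed

lemma linop_opA2: "linop opA2" by (auto simp: linop_def opA2_def fun_eq_iff)
lemma linop_opD2: "linop opD2" by (auto simp: linop_def opD2_def fun_eq_iff)
lemma linop_opC2: "linop opC2" by (auto simp: linop_def opC2_def fun_eq_iff)
lemma linop_opB2: "linop (opB2 q)" by (auto simp: linop_def opB2_def fun_eq_iff algebra_simps)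
lemma linop_opE2: "linop (opE2 q)" by (auto simp: linop_def opE2_def fun_eq_iff algebra_simps)
lemma linop_Dsh2: "linop (Dsh2 q)" by (auto simp: linop_def Dsh2_def fun_eq_iff algebra_simps)

definition ops2 :: "complex \<Rightarrow> gen \<Rightarrow> idx3 vec \<Rightarrow> idx3 vec" where
  "ops2 q g = (case g of Ga \<Rightarrow> opA2 | Gb \<Rightarrow> opB2 q | Gc \<Rightarrow> opC2 | Gd \<Rightarrow> opD2 | GDi \<Rightarrow> opE2 q)"

lemma linop_ops2: "linop (ops2 q g)"
  by (cases g) (auto simp: ops2_def linop_opA2 linop_opB2 linop_opC2 linop_opD2 linop_opE2)

lemma rho2_a: "rho (ops2 q) pa y = opA2 y" by (simp add: pa_def rho_gen ops2_def)
lemma rho2_b: "rho (ops2 q) pb y = opB2 q y" by (simp add: pb_def rho_gen ops2_def)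
lemma rho2_c: "rho (ops2 q) pc y = opC2 y" by (simp add: pc_def rho_gen ops2_def)
lemma rho2_d: "rho (ops2 q) pd y = opD2 y" by (simp add: pd_def rho_gen ops2_def)
lemma rho2_e: "rho (ops2 q) pe y = opE2 q y" by (simp add: pe_def rho_gen ops2_def)

lemma rho2_pD: "q \<noteq> 0 \<Longrightarrow> rho (ops2 q) (pD q) y = Dsh2 q y"
proof (rule ext)
  fix x :: idx3 assume q: "q \<noteq> 0"
  show "rho (ops2 q) (pD q) y x = Dsh2 q y x"
    using sDshift[OF q, of y x] by (simp add: pD_def rho_mult[OF linop_ops2] rho_diff[OF linop_ops2]
      rho_sm[OF linop_ops2] rho2_a rho2_b rho2_c rho2_d Q_m1)
qed

lemma rho2_kills:
  assumes q: "q \<noteq> 0" and r: "r \<in> DT q" shows "rho (ops2 q) r y = (\<lambda>x. 0)"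
proof -
  from r obtain f where f: "f \<in> Urels q \<union> DTrels" "r = toP f" by (auto simp: DT_def)
  have lin: "\<And>g. linop (ops2 q g)" by (rule linop_ops2)
  have "Q q (-1) = inverse q" "Q q 1 = q" "Q q 2 = q ^ 2" "Q q 0 = 1" by (simp_all add: Q_def)
  note Qs = this
  show ?thesis
  proof (rule ext)
    fix x :: idx3
    show "rho (ops2 q) r y x = 0"
      using f(1) unfolding Urels_def DTrels_def f(2)
      apply (elim UnE insertE emptyE)
      by (simp_all add: toP_simps toP_qD rho_mult[OF lin] rho_diff[OF lin] rho_sc rho_one rho2_a rho2_b rho2_c
       rho2_d rho2_e rho2_pD[OF q] sAB[OF q] sCD[OF q] sAC[OF q] sBD[OF q] sAD[OF q] sBC[OF q] Qs
       sDE[OF q] sED[OF q] tAB[OF q] tAC[OF q] tCD[OF q] tBD[OF q] tBA[OF q] tCA[OF q] tDC[OF q] tDB[OF q])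
  qed
qed


definition vac :: "idx3 vec" where "vac = (\<lambda>x. ev (True, 0, 0) x + ev (False, 0, 0) x)"

lemma A2_vac: "opA2 vac = ev (True, 1, 0)" by (auto simp: opA2_def vac_def ev_def fun_eq_iff)
lemma A2_ev: "opA2 (ev (True, a, b)) = ev (True, a + 1, b)" by (auto simp: opA2_def ev_def fun_eq_iff)
lemma D2_vac: "opD2 vac = ev (True, 0, 1)" by (auto simp: opD2_def vac_def ev_def fun_eq_iff)
lemma D2_ev: "opD2 (ev (True, a, b)) = ev (True, a, b + 1)" by (auto simp: opD2_def ev_def fun_eq_iff)
lemma B2_vac: "opB2 q vac = ev (False, 0, 1)" by (auto simp: opB2_def vac_def ev_def fun_eq_iff Q_zero)
lemma B2_ev: "opB2 q (ev (False, 0, b)) = ev (False, 0, b + 1)" by (auto simp: opB2_def ev_def fun_eq_iff Q_zero)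
lemma C2_vac: "opC2 vac = ev (False, 1, 0)" by (auto simp: opC2_def vac_def ev_def fun_eq_iff)
lemma C2_ev: "opC2 (ev (False, a, 0)) = ev (False, a + 1, 0)" by (auto simp: opC2_def ev_def fun_eq_iff)
lemma E2_evT: "opE2 q (ev (True, a, b)) = ev (True, a - 1, b - 1)" by (auto simp: opE2_def ev_def fun_eq_iff)
lemma E2_evF: "opE2 q (ev (False, a, b)) = (\<lambda>x. - Q q (1 - 2 * a) * ev (False, a - 1, b - 1) x)"
  by (auto simp: opE2_def ev_def fun_eq_iff)
lemma Dsh2_evT: "Dsh2 q (ev (True, a, b)) = ev (True, a + 1, b + 1)" by (auto simp: Dsh2_def ev_def fun_eq_iff)
lemma Dsh2_evF: "Dsh2 q (ev (False, a, b)) = (\<lambda>x. - Q q (2 * a + 1) * ev (False, a + 1, b + 1) x)"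
  by (auto simp: Dsh2_def ev_def fun_eq_iff)

lemma A2_iter: "(opA2 ^^ n) (ev (True, a, b)) = ev (True, a + int n, b)"
  apply (induct n) apply simp apply (simp add: A2_ev) apply (rule ev_cong) apply simp done
lemma D2_iter: "(opD2 ^^ n) (ev (True, a, b)) = ev (True, a, b + int n)"
  apply (induct n) apply simp apply (simp add: D2_ev) apply (rule ev_cong) apply simp done
lemma B2_iter: "(opB2 q ^^ n) (ev (False, 0, b)) = ev (False, 0, b + int n)"
  apply (induct n) apply simp apply (simp add: B2_ev) apply (rule ev_cong) apply simp done
lemma C2_iter: "(opC2 ^^ n) (ev (False, a, 0)) = ev (False, a + int n, 0)"
  apply (induct n) apply simp apply (simp add: C2_ev) apply (rule ev_cong) apply simp done
lemma Dsh2_iterT: "(Dsh2 q ^^ n) (ev (True, a, b)) = ev (True, a + int n, b + int n)"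
  apply (induct n) apply simp apply (simp add: Dsh2_evT) apply (rule ev_cong) apply simp done
lemma E2_iterT: "(opE2 q ^^ n) (ev (True, a, b)) = ev (True, a - int n, b - int n)"
  apply (induct n) apply simp apply (simp add: E2_evT) apply (rule ev_cong) apply simp done

lemma Dsh2_iterF: "q \<noteq> 0 \<Longrightarrow> \<exists>s. s \<noteq> 0 \<and> (Dsh2 q ^^ n) (ev (False, a, b)) = (\<lambda>x. s * ev (False, a + int n, b + int n) x)"
proof (induct n)
  case 0 then show ?case by (intro exI[of _ 1]) simp
next
  case (Suc n)
  then obtain s where s: "s \<noteq> 0" "(Dsh2 q ^^ n) (ev (False, a, b)) = (\<lambda>x. s * ev (False, a + int n, b + int n) x)" by blast
  have "(Dsh2 q ^^ Suc n) (ev (False, a, b)) = (\<lambda>x. s * (- Q q (2 * (a + int n) + 1)) * ev (False, a + int n + 1, b + int n + 1) x)"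
    by (simp add: s(2) linop_scal[OF linop_Dsh2] Dsh2_evF mult.assoc)
  moreover have "ev (False, a + int n + 1, b + int n + 1) = ev (False, a + int (Suc n), b + int (Suc n))"
    by (rule ev_cong) simp
  moreover have "s * (- Q q (2 * (a + int n) + 1)) \<noteq> 0" using s(1) Suc(2) by (simp add: Q_nz)
  ultimately show ?case by metis
qed

lemma E2_iterF: "q \<noteq> 0 \<Longrightarrow> \<exists>s. s \<noteq> 0 \<and> (opE2 q ^^ n) (ev (False, a, b)) = (\<lambda>x. s * ev (False, a - int n, b - int n) x)"
proof (induct n)
  case 0 then show ?case by (intro exI[of _ 1]) simp
next
  case (Suc n)
  then obtain s where s: "s \<noteq> 0" "(opE2 q ^^ n) (ev (False, a, b)) = (\<lambda>x. s * ev (False, a - int n, b - int n) x)" by blast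
  have "(opE2 q ^^ Suc n) (ev (False, a, b)) = (\<lambda>x. s * (- Q q (1 - 2 * (a - int n))) * ev (False, a - int n - 1, b - int n - 1) x)"
    by (simp add: s(2) linop_scal[OF linop_opE2] E2_evF mult.assoc)
  moreover have "ev (False, a - int n - 1, b - int n - 1) = ev (False, a - int (Suc n), b - int (Suc n))"
    by (rule ev_cong) simp
  moreover have "s * (- Q q (1 - 2 * (a - int n))) \<noteq> 0" using s(1) Suc(2) by (simp add: Q_nz)
  ultimately show ?case by metis
qed


definition pos :: "idx2 \<Rightarrow> idx3" where
  "pos i = (case i of IA m n \<Rightarrow> (True, m + int n, m) | ID m n \<Rightarrow> (True, m, m + int n) | IZ m \<Rightarrow> (True, m, m)
     | IB m n \<Rightarrow> (False, m, m + int n) | IC m n \<Rightarrow> (False, m + int n, m) | IZc m \<Rightarrow> (False, m, m))"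

lemma pos_inj: "i \<in> S2 \<Longrightarrow> j \<in> S2 \<Longrightarrow> pos i = pos j \<Longrightarrow> i = j"
  by (cases i; cases j) (auto simp: S2_def pos_def)

context qdt begin

lemma lin2: "\<And>g. linop (ops2 q g)" by (rule linop_ops2)

lemma rD2: "rho (ops2 q) (pD q) = Dsh2 q" using rho2_pD[OF qnz2] by (rule ext)
lemma ra2: "rho (ops2 q) pa = opA2" using rho2_a by (rule ext)
lemma rb2: "rho (ops2 q) pb = opB2 q" using rho2_b by (rule ext)
lemma rc2: "rho (ops2 q) pc = opC2" using rho2_c by (rule ext)
lemma rd2: "rho (ops2 q) pd = opD2" using rho2_d by (rule ext)
lemma re2: "rho (ops2 q) pe = opE2 q" using rho2_e by (rule ext)

lemma Dp_T: "rho (ops2 q) (Dp k) (ev (True, a, b)) = ev (True, a + k, b + k)"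
  by (auto simp: Dp_def rho_pow[OF lin2] rD2 re2 Dsh2_iterT E2_iterT intro!: ev_cong)

lemma Dp_F: "\<exists>s. s \<noteq> 0 \<and> rho (ops2 q) (Dp k) (ev (False, a, b)) = (\<lambda>x. s * ev (False, a + k, b + k) x)"
proof (cases "k \<ge> 0")
  case True
  obtain s where "s \<noteq> 0" "(Dsh2 q ^^ nat k) (ev (False, a, b)) = (\<lambda>x. s * ev (False, a + int (nat k), b + int (nat k)) x)"
    using Dsh2_iterF[OF qnz2] by blast
  then show ?thesis using True by (auto simp: Dp_def rho_pow[OF lin2] rD2)
next
  case False
  obtain s where "s \<noteq> 0" "(opE2 q ^^ nat (- k)) (ev (False, a, b)) = (\<lambda>x. s * ev (False, a - int (nat (- k)), b - int (nat (- k))) x)"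
    using E2_iterF[OF qnz2] by blast
  then show ?thesis using False by (auto simp: Dp_def rho_pow[OF lin2] re2)
qed

lemma pow_vac_a: "n > 0 \<Longrightarrow> rho (ops2 q) (pa ^ n) vac = ev (True, int n, 0)"
proof -
  assume "n > 0" then obtain n' where n: "n = Suc n'" by (cases n) auto
  show ?thesis unfolding n rho_pow[OF lin2] ra2 funpow_Suc_right comp_def by (auto simp: A2_vac A2_iter intro!: ev_cong)
qed
lemma pow_vac_d: "n > 0 \<Longrightarrow> rho (ops2 q) (pd ^ n) vac = ev (True, 0, int n)"
proof -
  assume "n > 0" then obtain n' where n: "n = Suc n'" by (cases n) auto
  show ?thesis unfolding n rho_pow[OF lin2] rd2 funpow_Suc_right comp_def by (auto simp: D2_vac D2_iter intro!: ev_cong)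
qed
lemma pow_vac_b: "n > 0 \<Longrightarrow> rho (ops2 q) (pb ^ n) vac = ev (False, 0, int n)"
proof -
  assume "n > 0" then obtain n' where n: "n = Suc n'" by (cases n) auto
  show ?thesis unfolding n rho_pow[OF lin2] rb2 funpow_Suc_right comp_def by (auto simp: B2_vac B2_iter intro!: ev_cong)
qed
lemma pow_vac_c: "n > 0 \<Longrightarrow> rho (ops2 q) (pc ^ n) vac = ev (False, int n, 0)"
proof -
  assume "n > 0" then obtain n' where n: "n = Suc n'" by (cases n) auto
  show ?thesis unfolding n rho_pow[OF lin2] rc2 funpow_Suc_right comp_def by (auto simp: C2_vac C2_iter intro!: ev_cong)
qed
lemma Z_vac: "rho (ops2 q) pZ vac = ev (True, 0, 0)"
  by (simp add: pZ_def rho_mult[OF lin2] re2 ra2 rd2 D2_vac A2_ev E2_evT)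
lemma Zc_vac: "rho (ops2 q) (1 - pZ) vac = ev (False, 0, 0)"
proof -
  have "rho (ops2 q) (1 - pZ) vac = (\<lambda>x. vac x - ev (True, 0, 0) x)" by (simp add: rho_diff[OF lin2] rho_one Z_vac)
  then show ?thesis by (auto simp: vac_def ev_def fun_eq_iff)
qed

lemma N_vac: "i \<in> S2 \<Longrightarrow> \<exists>s. s \<noteq> 0 \<and> rho (ops2 q) (N i) vac = (\<lambda>x. s * ev (pos i) x)"
proof (cases i)
  case (IA m n)
  assume "i \<in> S2" then have n: "n > 0" by (auto simp: S2_def IA)
  show ?thesis using n
    by (intro exI[of _ 1]) (auto simp: IA N_def pos_def rho_mult[OF lin2] pow_vac_a Dp_T intro!: ev_cong)
next
  case (ID m n)
  assume "i \<in> S2" then have n: "n > 0" by (auto simp: S2_def ID)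
  show ?thesis using n
    by (intro exI[of _ 1]) (auto simp: ID N_def pos_def rho_mult[OF lin2] pow_vac_d Dp_T intro!: ev_cong)
next
  case (IZ m)
  show ?thesis
    by (intro exI[of _ 1]) (auto simp: IZ N_def pos_def rho_mult[OF lin2] Z_vac Dp_T intro!: ev_cong)
next
  case (IB m n)
  assume "i \<in> S2" then have n: "n > 0" by (auto simp: S2_def IB)
  obtain s where s: "s \<noteq> 0" "rho (ops2 q) (Dp m) (ev (False, 0, int n)) = (\<lambda>x. s * ev (False, 0 + m, int n + m) x)"
    using Dp_F by blast
  show ?thesis using n s
    by (intro exI[of _ s]) (auto simp: IB N_def pos_def rho_mult[OF lin2] pow_vac_b add.commute)
next
  case (IC m n)
  assume "i \<in> S2" then have n: "n > 0" by (auto simp: S2_def IC)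
  obtain s where s: "s \<noteq> 0" "rho (ops2 q) (Dp m) (ev (False, int n, 0)) = (\<lambda>x. s * ev (False, int n + m, 0 + m) x)"
    using Dp_F by blast
  show ?thesis using n s
    by (intro exI[of _ s]) (auto simp: IC N_def pos_def rho_mult[OF lin2] pow_vac_c add.commute)
next
  case (IZc m)
  obtain s where s: "s \<noteq> 0" "rho (ops2 q) (Dp m) (ev (False, 0, 0)) = (\<lambda>x. s * ev (False, 0 + m, 0 + m) x)"
    using Dp_F by blast
  show ?thesis using s
    by (intro exI[of _ s]) (auto simp: IZc N_def pos_def rho_mult[OF lin2] Zc_vac)
qed

end

lemma indep2:
  assumes q: "q \<noteq> 0" and T: "finite T" "T \<subseteq> S2"
    and I: "fa_lincomb c T (mono2 q) \<in> fa_ideal (Urels q \<union> DTrels)" and j: "j \<in> T"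
  shows "c j = 0"
proof -
  interpret qdt q by unfold_locales (rule q)
  let ?f = "fa_lincomb c T (mono2 q)"
  have "toP ?f \<in> pI (DT q)" using fa_to_pI[OF I DTrels_FA] by (simp add: DT_def)
  then have z: "rho (ops2 q) (toP ?f) vac = (\<lambda>x. 0)"
    by (intro rho_kills[OF lin2 rho2_kills[OF q]])
  define s where "s i = (SOME s. s \<noteq> 0 \<and> rho (ops2 q) (N i) vac = (\<lambda>x. s * ev (pos i) x))" for i
  have s: "s i \<noteq> 0 \<and> rho (ops2 q) (N i) vac = (\<lambda>x. s i * ev (pos i) x)" if "i \<in> S2" for i
    unfolding s_def by (rule someI_ex[OF N_vac[OF that]])
  have "toP ?f = (\<Sum>i\<in>T. sm (c i) (N i))"
    using lincomb_toP[of T "mono2 q" c, OF T(1) FA_mono2] by (simp add: toP_mono2)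
  then have "rho (ops2 q) (toP ?f) vac = (\<lambda>x. \<Sum>i\<in>T. c i * rho (ops2 q) (N i) vac x)"
    by (simp add: rho_sum[OF T(1)] rho_sm[OF lin2])
  also have "\<dots> = (\<lambda>x. \<Sum>i\<in>T. c i * (s i * ev (pos i) x))"
    using s T(2) by (intro ext sum.cong) auto
  finally have "(\<Sum>i\<in>T. c i * (s i * ev (pos i) (pos j))) = 0" using z by (metis (mono_tags))
  moreover have "(\<Sum>i\<in>T. c i * (s i * ev (pos i) (pos j))) = (\<Sum>i\<in>T. if i = j then c j * s j else 0)"
  proof (rule sum.cong)
    fix i assume i: "i \<in> T"
    have "i \<in> S2" "j \<in> S2" using T(2) j i by auto
    then show "c i * (s i * ev (pos i) (pos j)) = (if i = j then c j * s j else 0)"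
      using pos_inj[of i j] by (auto simp: ev_def)
  qed simp
  moreover have "\<dots> = c j * s j" using T(1) j by simp
  ultimately have "c j * s j = 0" by simp
  moreover have "s j \<noteq> 0" using s[of j] T(2) j by auto
  ultimately show ?thesis by simp
qed

lemma part2:
  assumes "cmod q = 1" shows "basis_mod (fa_ideal (Urels q \<union> DTrels)) S2 (mono2 q)"
proof -
  have q: "q \<noteq> 0" using assms by auto
  show ?thesis unfolding basis_mod_def
    using span2[OF q] indep2[OF q] by blast
qed

theorem lemma1p2:
  fixes q :: complex
  assumes "cmod q = 1"
  shows "basis_mod (fa_ideal (Urels q)) UNIV (mono1 q) \<and>
         basis_mod (fa_ideal (Urels q \<union> DTrels)) S2 (mono2 q)"
  using part1[OF assms] part2[OF assms] by simp


end
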